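(* Let $f : \mathbb{R}^{N\times N} \to \mathbb{R}$ be differentiable with $\|\nabla f(X') - \nabla f(X'')\|_F \leq M_1 \|X' - X''\|_F$ for all $X', X'' \in \mathcal{O}(N)$, for some $M_1 > 0$. Let $\widetilde f : \mathbb{R}^{N\times N}\to\mathbb{R}$ be a random differentiable function such that $\mathbb{E}\,\nabla \widetilde f(X) = \nabla f(X)$ and $\mathbb{E}\,\|\nabla \widetilde f(X)\|_F^2 \leq M_2$ for all $X \in \mathcal{O}(N)$, for some $M_2>0$; at each iteration below an independent copy of $\widetilde f$ is drawn. Let $v^{(0,1)}, \dots, v^{(0,L)} \in \mathbb{R}^N$ be deterministic nonzero vectors and for $k > 0$, $1 \le l \le L$ define $$v^{(k,l)} = v^{(k-1,l)} - k^{-1/2}\, \nabla_{v^{(k-1,l)}} \widetilde f\big(H(v^{(k-1,1)}) \cdots H(v^{(k-1,L)})\big).$$ Then all $v^{(k,l)}$ are well-defined (nonzero), and for every $\epsilon > 0$, $$\min_{0 \le k' < K} \sum_{l=1}^L \mathbb{E}\,\Big\|\nabla_{v^{(k',l)}} f\big(H(v^{(k',1)}) \cdots H(v^{(k',L)})\big)\Big\|_2^2 = o\big(K^{-1/2+\epsilon}\big) \quad (K\to\infty).$$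
   Context: $\mathcal{O}(N) = \{Q \in \mathbb{R}^{N\times N} : Q^\top Q = I\}$; $\|\cdot\|_F$ is the Frobenius norm. For nonzero $v\in\mathbb{R}^N$, $H(v) = I - 2vv^\top/\|v\|_2^2$. The notation $\nabla_{v^{(l)}} g(H(v^{(1)})\cdots H(v^{(L)}))$ denotes the gradient with respect to $v^{(l)}\in\mathbb{R}^N$ of the composite function $(v^{(1)},\dots,v^{(L)}) \mapsto g(H(v^{(1)})\cdots H(v^{(L)}))$. *)

theory Defs
  imports "HOL-Analysis.Analysis" "HOL-Probability.Probability" "HOL-Library.Landau_Symbols"
begin

text \<open>Euclidean gradient of a differentiable real function on a Euclidean space
  (e.g. on real^'n^'n, where the inner product is the Frobenius inner product
  and norm is the Frobenius norm).\<close>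
definition grad :: "('a::real_inner \<Rightarrow> real) \<Rightarrow> 'a \<Rightarrow> 'a" where
  "grad g x = (SOME D. GDERIV g x :> D)"

definition householder :: "real^'n \<Rightarrow> real^'n^'n" where
  "householder v = mat 1 - (2 / (norm v)^2) *\<^sub>R (\<chi> i j. v$i * v$j)"

definition hprod :: "nat \<Rightarrow> (nat \<Rightarrow> real^'n) \<Rightarrow> real^'n^'n" where
  "hprod L V = foldr (\<lambda>l A. householder (V l) ** A) [1..<Suc L] (mat 1)"

definition pgrad :: "(real^'n^'n \<Rightarrow> real) \<Rightarrow> nat \<Rightarrow> (nat \<Rightarrow> real^'n) \<Rightarrow> nat \<Rightarrow> real^'n" where
  "pgrad g L V l = grad (\<lambda>w. g (hprod L (V(l := w)))) (V l)"

text \<open>SGD iterates: \<omega> k is the sample of the random function used at step k+1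
  (step size (k+1)^(-1/2)).\<close>
primrec sgd_iter :: "('w \<Rightarrow> real^'n^'n \<Rightarrow> real) \<Rightarrow> nat \<Rightarrow> (nat \<Rightarrow> real^'n)
     \<Rightarrow> (nat \<Rightarrow> 'w) \<Rightarrow> nat \<Rightarrow> (nat \<Rightarrow> real^'n)" where
  "sgd_iter ft L V0 \<omega> 0 = V0"
| "sgd_iter ft L V0 \<omega> (Suc k) =
     (\<lambda>l. sgd_iter ft L V0 \<omega> k l
          - (1 / sqrt (real (Suc k))) *\<^sub>R pgrad (ft (\<omega> k)) L (sgd_iter ft L V0 \<omega> k) l)"

end

theory Submission
  imports Defs "HOL-Real_Asymp.Real_Asymp"
begin


lemma norm_mmul_le:
  fixes A B :: "real^'n^'n"
  shows "norm (A ** B) \<le> norm A * norm B"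
proof -
  have row: "norm ((A ** B)$i) \<le> norm (A$i) * norm B" for i
  proof -
    have "(A ** B)$i = (\<Sum>k\<in>UNIV. A$i$k *\<^sub>R B$k)"
      by (simp add: matrix_matrix_mult_def vec_eq_iff sum_component)
    hence "norm ((A ** B)$i) \<le> (\<Sum>k\<in>UNIV. \<bar>A$i$k\<bar> * norm (B$k))"
      using norm_sum[of "\<lambda>k. A$i$k *\<^sub>R B$k" UNIV] by simp
    also have "\<dots> = (\<Sum>k\<in>UNIV. \<bar>A$i$k\<bar> * \<bar>norm (B$k)\<bar>)" by simp
    also have "\<dots> \<le> L2_set (\<lambda>k. A$i$k) UNIV * L2_set (\<lambda>k. norm (B$k)) UNIV"
      by (rule L2_set_mult_ineq)
    also have "\<dots> = norm (A$i) * norm B"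
      by (simp add: norm_vec_def L2_set_def)
    finally show ?thesis .
  qed
  have "norm (A ** B) = L2_set (\<lambda>i. norm ((A ** B)$i)) UNIV" by (simp add: norm_vec_def)
  also have "\<dots> \<le> L2_set (\<lambda>i. norm (A$i) * norm B) UNIV"
    by (rule L2_set_mono) (auto simp: row)
  also have "\<dots> = norm A * norm B"
    by (simp add: norm_vec_def L2_set_left_distrib)
  finally show ?thesis .
qed


lemma bb_mm: "bounded_bilinear ((**) :: real^'n^'n \<Rightarrow> real^'n^'n \<Rightarrow> real^'n^'n)"
proof
  fix a a' b b' :: "real^'n^'n" and r :: real
  show "(a + a') ** b = a ** b + a' ** b"
    by (simp add: matrix_matrix_mult_def vec_eq_iff sum.distrib algebra_simps)
  show "a ** (b + b') = a ** b + a ** b'" by (rule matrix_add_ldistrib)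
  show "(r *\<^sub>R a) ** b = r *\<^sub>R (a ** b)" by (simp add: scalar_matrix_assoc)
  show "a ** (r *\<^sub>R b) = r *\<^sub>R (a ** b)" by (simp add: matrix_scalar_ac scalar_matrix_assoc)
  show "\<exists>K. \<forall>(a::real^'n^'n) (b::real^'n^'n). norm (a ** b) \<le> norm a * norm b * K"
    apply (intro exI[of _ 1] allI)
    subgoal for x y using norm_mmul_le[of x y] by simp
    done
qed

definition outer :: "real^'n \<Rightarrow> real^'n \<Rightarrow> real^'n^'n" where
  "outer u v = (\<chi> i j. u$i * v$j)"

lemma outer_rows: "outer u v = (\<chi> i. u$i *\<^sub>R v)"
  by (simp add: outer_def vec_eq_iff)

lemma norm_outer: "norm (outer u v) = norm u * norm v"
proof -
  have "norm (outer u v) = L2_set (\<lambda>i. \<bar>u$i\<bar> * norm v) UNIV"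
    by (simp add: outer_rows norm_vec_def[of "\<chi> i. u$i *\<^sub>R v"])
  also have "\<dots> = L2_set (\<lambda>i. u$i) UNIV * norm v"
    by (simp add: L2_set_def power_mult_distrib sum_distrib_right[symmetric] real_sqrt_mult)
  also have "L2_set (\<lambda>i. u$i) UNIV = norm u" by (simp add: norm_vec_def L2_set_def)
  finally show ?thesis .
qed

lemma bb_outer: "bounded_bilinear (outer :: real^'n \<Rightarrow> real^'n \<Rightarrow> real^'n^'n)"
proof
  fix a a' b b' :: "real^'n" and r :: real
  show "outer (a + a') b = outer a b + outer a' b" by (simp add: outer_def vec_eq_iff algebra_simps)
  show "outer a (b + b') = outer a b + outer a b'" by (simp add: outer_def vec_eq_iff algebra_simps)
  show "outer (r *\<^sub>R a) b = r *\<^sub>R outer a b" by (simp add: outer_def vec_eq_iff algebra_simps)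
  show "outer a (r *\<^sub>R b) = r *\<^sub>R outer a b" by (simp add: outer_def vec_eq_iff algebra_simps)
  show "\<exists>K. \<forall>a b :: real^'n. norm (outer a b) \<le> norm a * norm b * K"
    by (rule exI[of _ 1]) (simp add: norm_outer)
qed

lemma outer_mult: "outer a b ** outer c d = (b \<bullet> c) *\<^sub>R outer a d"
  by (simp add: outer_def matrix_matrix_mult_def vec_eq_iff inner_vec_def sum_distrib_left
       sum_distrib_right algebra_simps)

lemma transpose_outer: "transpose (outer a b) = outer b a"
  by (simp add: outer_def transpose_def vec_eq_iff)

lemma householder_outer: "householder v = mat 1 - (2 / (norm v)^2) *\<^sub>R outer v v"
  by (simp add: householder_def outer_def)

lemma householder_sq:
  assumes "v \<noteq> 0"
  shows "householder v ** householder v = mat 1"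
proof -
  let ?c = "2 / (norm v)^2" and ?P = "outer v v"
  have vv: "v \<bullet> v = (norm v)^2" by (simp add: power2_norm_eq_inner)
  have nz: "norm v \<noteq> 0" using assms by simp
  have "householder v ** householder v
      = mat 1 - ?c *\<^sub>R ?P - ?c *\<^sub>R ?P + (?c * ?c) *\<^sub>R (?P ** ?P)"
    unfolding householder_outer
    by (simp add: bounded_bilinear.diff_left[OF bb_mm] bounded_bilinear.diff_right[OF bb_mm]
        scalar_matrix_assoc[symmetric] matrix_scalar_ac algebra_simps)
  also have "(?c * ?c) *\<^sub>R (?P ** ?P) = (2 * ?c) *\<^sub>R ?P"
    using nz by (simp add: outer_mult vv power2_eq_square field_simps)
  also have "mat 1 - ?c *\<^sub>R ?P - ?c *\<^sub>R ?P + (2 * ?c) *\<^sub>R ?P = mat 1"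
    by (simp only: mult_2 scaleR_add_left) simp
  finally show ?thesis .
qed

lemma householder_transpose: "transpose (householder v) = householder v"
  by (simp add: householder_outer outer_def mat_def vec_eq_iff transpose_def)

lemma householder_orth: "v \<noteq> 0 \<Longrightarrow> orthogonal_matrix (householder v)"
  by (simp add: orthogonal_matrix householder_transpose householder_sq)

lemma hprod_orth:
  assumes "\<forall>l\<in>{1..L}. V l \<noteq> 0"
  shows "orthogonal_matrix (hprod L V)"
proof -
  have "\<forall>l\<in>set xs. V l \<noteq> 0 \<Longrightarrow> orthogonal_matrix (foldr (\<lambda>l A. householder (V l) ** A) xs (mat 1))" for xs
    by (induction xs) (auto simp: orthogonal_matrix_id orthogonal_matrix_mul householder_orth)
  moreover have "set [1..<Suc L] = {1..L}" by auto
  ultimately show ?thesis using assms unfolding hprod_def by metis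
qed


definition dH :: "real^'n \<Rightarrow> real^'n \<Rightarrow> real^'n^'n" where
  "dH v d = (4 * (v \<bullet> d) / (norm v)^4) *\<^sub>R outer v v - (2 / (norm v)^2) *\<^sub>R (outer d v + outer v d)"

lemma householder_inner: "householder w = mat 1 - (2 / (w \<bullet> w)) *\<^sub>R outer w w"
  by (simp add: householder_outer power2_norm_eq_inner)

lemma coef_deriv:
  fixes w :: "real^'n"
  assumes "w \<noteq> 0"
  shows "((\<lambda>w. 2 / (w \<bullet> w)) has_derivative (\<lambda>h. - (4 * (w \<bullet> h) / (norm w)^4))) (at w)"
proof -
  have ww: "w \<bullet> w \<noteq> 0" using assms by simp
  have "((\<lambda>w. 2 / (w \<bullet> w)) has_derivative
      (\<lambda>h. - (2 * inverse (w \<bullet> w) * (h \<bullet> w + w \<bullet> h) * inverse (w \<bullet> w)))) (at w)"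
    using ww by (auto intro!: derivative_eq_intros simp: divide_inverse)
  moreover have "(\<lambda>h. - (2 * inverse (w \<bullet> w) * (h \<bullet> w + w \<bullet> h) * inverse (w \<bullet> w)))
      = (\<lambda>h. - (4 * (w \<bullet> h) / (norm w)^4))"
    using ww by (auto simp: fun_eq_iff inner_commute power2_norm_eq_inner[symmetric] field_simps
      power4_eq_xxxx power2_eq_square)
  ultimately show ?thesis by simp
qed

lemma householder_deriv:
  fixes v :: "real^'n"
  assumes "v \<noteq> 0"
  shows "(householder has_derivative dH v) (at v)"
proof -
  have "((\<lambda>w. mat 1 - (2 / (w \<bullet> w)) *\<^sub>R outer w w) has_derivative
     (\<lambda>h. 0 - ((2 / (v \<bullet> v)) *\<^sub>R (outer v h + outer h v) + (- (4 * (v \<bullet> h) / (norm v)^4)) *\<^sub>R outer v v))) (at v)"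
    by (intro has_derivative_diff has_derivative_const has_derivative_scaleR coef_deriv[OF assms]
        bounded_bilinear.FDERIV[OF bb_outer] has_derivative_ident)
  moreover have "(\<lambda>h. 0 - ((2 / (v \<bullet> v)) *\<^sub>R (outer v h + outer h v) + (- (4 * (v \<bullet> h) / (norm v)^4)) *\<^sub>R outer v v)) = dH v"
    by (auto simp: fun_eq_iff dH_def power2_norm_eq_inner algebra_simps)
  ultimately show ?thesis unfolding householder_inner[abs_def] by simp
qed

lemma linear_dH: "v \<noteq> 0 \<Longrightarrow> linear (dH v)"
  using householder_deriv has_derivative_linear by blast

lemma dH_self: "dH v v = 0"
proof (cases "v = 0")
  case True thus ?thesis by (simp add: dH_def outer_def vec_eq_iff)
next
  case False
  have "v \<bullet> v = (norm v)^2" by (simp add: power2_norm_eq_inner)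
  thus ?thesis using False
    by (simp add: dH_def power4_eq_xxxx power2_eq_square scaleR_2[symmetric] field_simps)
qed

lemma dH_zero: "dH v 0 = 0"
  by (simp add: dH_def outer_def vec_eq_iff)

lemma norm_dH: "norm (dH v d) \<le> 8 * norm d / norm v"
proof (cases "v = 0")
  case True thus ?thesis by (simp add: dH_def outer_def)
next
  case False
  hence nv: "norm v > 0" by simp
  have "norm (dH v d) \<le> norm ((4 * (v \<bullet> d) / (norm v)^4) *\<^sub>R outer v v)
      + norm ((2 / (norm v)^2) *\<^sub>R (outer d v + outer v d))"
    unfolding dH_def by (rule norm_triangle_ineq4)
  also have "norm ((4 * (v \<bullet> d) / (norm v)^4) *\<^sub>R outer v v) \<le> 4 * norm d / norm v"
  proof -
    have "norm ((4 * (v \<bullet> d) / (norm v)^4) *\<^sub>R outer v v) = 4 * \<bar>v \<bullet> d\<bar> / (norm v)^2"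
      using nv by (simp add: norm_outer power4_eq_xxxx power2_eq_square abs_mult)
    also have "\<dots> \<le> 4 * (norm v * norm d) / (norm v)^2"
      by (intro divide_right_mono mult_left_mono Cauchy_Schwarz_ineq2) auto
    also have "\<dots> = 4 * norm d / norm v" using nv by (simp add: power2_eq_square)
    finally show ?thesis .
  qed
  also have "norm ((2 / (norm v)^2) *\<^sub>R (outer d v + outer v d)) \<le> 4 * norm d / norm v"
  proof -
    have "norm (outer d v + outer v d) \<le> 2 * (norm v * norm d)"
      using norm_triangle_ineq[of "outer d v" "outer v d"] by (simp add: norm_outer mult.commute)
    hence "(2 / (norm v)^2) * norm (outer d v + outer v d) \<le> (2 / (norm v)^2) * (2 * (norm v * norm d))"
      by (rule mult_left_mono) auto
    hence "norm ((2 / (norm v)^2) *\<^sub>R (outer d v + outer v d)) \<le> (2 / (norm v)^2) * (2 * (norm v * norm d))"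
      by simp
    also have "\<dots> = 4 * norm d / norm v" using nv by (simp add: power2_eq_square)
    finally show ?thesis .
  qed
  finally show ?thesis by simp
qed

definition nH :: real where "nH = norm (mat 1 :: real^'n^'n) + 2"

lemma norm_householder: "norm (householder (v::real^'n)) \<le> nH TYPE('n)"
proof -
  have "norm ((2 / (norm v)^2) *\<^sub>R outer v v) \<le> 2"
    by (cases "v = 0") (auto simp: norm_outer power2_eq_square)
  thus ?thesis unfolding householder_outer nH_def
    using norm_triangle_ineq4[of "mat 1" "(2 / (norm v)^2) *\<^sub>R outer v v"] by linarith
qed

lemma nH_pos: "nH TYPE('n::finite) > 0"
  by (simp add: nH_def add_nonneg_pos)

lemma householder_second_identity:
  fixes v d :: "real^'n"
  assumes v0: "v \<noteq> 0" and orth: "v \<bullet> d = 0"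
  shows "householder (v + d) - householder v - dH v d =
    (2 * (norm d)^2 / ((norm v)^2 * ((norm v)^2 + (norm d)^2))) *\<^sub>R (outer v v + outer d v + outer v d)
    - (2 / ((norm v)^2 + (norm d)^2)) *\<^sub>R outer d d"
proof -
  have p: "(norm (v + d))^2 = (norm v)^2 + (norm d)^2"
    using norm_add_Pythagorean[of v d] orth by (simp add: orthogonal_def)
  have a: "(norm v)^2 > 0" using v0 by simp
  have b: "(norm d)^2 \<ge> 0" by simp
  have ab: "(norm v)^2 + (norm d)^2 > 0" using a b by linarith
  have gen: "\<And>a b x y z w m::real. a > 0 \<Longrightarrow> a + b > 0 \<Longrightarrow>
     (m - 2 / (a + b) * ((x + z) * (y + w))) - (m - 2 / a * (x * y)) - (0 - 2 / a * (z * y + x * w))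
     = (2 * b / (a * (a + b))) * (x * y + z * y + x * w) - 2 / (a + b) * (z * w)"
  proof -
    fix a b x y z w m :: real assume h: "a > 0" "a + b > 0"
    have e: "2 / a - 2 / (a + b) = 2 * b / (a * (a + b))" using h by (simp add: field_simps)
    have "(m - 2 / (a + b) * ((x + z) * (y + w))) - (m - 2 / a * (x * y)) - (0 - 2 / a * (z * y + x * w))
      = (2 / a - 2 / (a + b)) * (x * y + z * y + x * w) - 2 / (a + b) * (z * w)"
      by (simp add: algebra_simps)
    thus "(m - 2 / (a + b) * ((x + z) * (y + w))) - (m - 2 / a * (x * y)) - (0 - 2 / a * (z * y + x * w))
      = (2 * b / (a * (a + b))) * (x * y + z * y + x * w) - 2 / (a + b) * (z * w)" by (simp only: e)
  qed
  show ?thesis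
    unfolding householder_outer dH_def p orth
    using gen[OF a ab]
    by (simp add: vec_eq_iff outer_def)
qed

lemma householder_second:
  fixes v d :: "real^'n"
  assumes v0: "v \<noteq> 0" and orth: "v \<bullet> d = 0"
  shows "norm (householder (v + d) - householder v - dH v d) \<le> 6 * (norm d / norm v)^2"
proof -
  define a where "a = (norm v)^2"
  define b where "b = (norm d)^2"
  have a: "a > 0" using v0 by (simp add: a_def)
  have b: "b \<ge> 0" by (simp add: b_def)
  have ab: "a + b > 0" using a b by linarith
  have cs: "2 * (norm v * norm d) \<le> a + b"
    unfolding a_def b_def using sum_squares_bound[of "norm v" "norm d"] by (simp add: power2_eq_square)
  have n1: "norm (outer v v + outer d v + outer v d) \<le> a + 2 * (norm v * norm d)"
    using norm_triangle_ineq[of "outer v v + outer d v" "outer v d"]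
      norm_triangle_ineq[of "outer v v" "outer d v"]
    by (simp add: norm_outer a_def power2_eq_square mult.commute)
  have c1: "2 * b / (a * (a + b)) \<ge> 0" using a b ab by simp
  have "norm ((2 * b / (a * (a + b))) *\<^sub>R (outer v v + outer d v + outer v d))
      = (2 * b / (a * (a + b))) * norm (outer v v + outer d v + outer v d)" by (simp only: norm_scaleR abs_of_nonneg[OF c1])
  also have "\<dots> \<le> (2 * b / (a * (a + b))) * (a + (a + b))"
    using n1 cs c1 by (intro mult_left_mono) auto
  also have "\<dots> = 2 * b / (a + b) + 2 * b / a" using a ab by (simp add: field_simps)
  also have "\<dots> \<le> 4 * b / a"
  proof -
    have "2 * b / (a + b) \<le> 2 * b / a" using a b by (intro divide_left_mono) auto
    thus ?thesis by simp
  qed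
  finally have t1: "norm ((2 * b / (a * (a + b))) *\<^sub>R (outer v v + outer d v + outer v d)) \<le> 4 * b / a" .
  have "norm ((2 / (a + b)) *\<^sub>R outer d d) = 2 * b / (a + b)"
    using ab by (simp add: norm_outer b_def power2_eq_square)
  also have "\<dots> \<le> 2 * b / a" using a b by (intro divide_left_mono) auto
  finally have t2: "norm ((2 / (a + b)) *\<^sub>R outer d d) \<le> 2 * b / a" .
  have "norm (householder (v + d) - householder v - dH v d)
     \<le> norm ((2 * b / (a * (a + b))) *\<^sub>R (outer v v + outer d v + outer v d))
       + norm ((2 / (a + b)) *\<^sub>R outer d d)"
    unfolding householder_second_identity[OF v0 orth] a_def[symmetric] b_def[symmetric]
    by (rule norm_triangle_ineq4)
  also have "\<dots> \<le> 6 * b / a" using t1 t2 by simp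
  also have "\<dots> = 6 * (norm d / norm v)^2" by (simp add: a_def b_def power_divide)
  finally show ?thesis .
qed

lemma householder_first:
  fixes v d :: "real^'n"
  assumes v0: "v \<noteq> 0" and orth: "v \<bullet> d = 0"
  shows "norm (householder (v + d) - householder v) \<le> (14 + 2 * nH TYPE('n)) * (norm d / norm v)"
proof -
  define r where "r = norm d / norm v"
  have r0: "r \<ge> 0" by (simp add: r_def)
  have "norm (householder (v + d) - householder v) \<le> norm (dH v d) + norm (householder (v + d) - householder v - dH v d)"
    using norm_triangle_ineq[of "dH v d" "householder (v + d) - householder v - dH v d"] by simp
  also have "\<dots> \<le> 8 * r + 6 * r^2"
    using norm_dH[of v d] householder_second[OF v0 orth] by (simp add: r_def)
  finally have A: "norm (householder (v + d) - householder v) \<le> 8 * r + 6 * r^2" .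
  have B: "norm (householder (v + d) - householder v) \<le> 2 * nH TYPE('n)"
    using norm_triangle_ineq4[of "householder (v + d)" "householder v"]
      norm_householder[of "v+d"] norm_householder[of v] by linarith
  have nHp: "nH TYPE('n) > 0" by (rule nH_pos)
  show ?thesis
  proof (cases "r \<le> 1")
    case True
    hence "6 * r^2 \<le> 6 * r" using r0 by (simp add: power2_eq_square mult_left_le)
    moreover have "0 \<le> r * nH TYPE('n)" using nHp r0 by simp
    moreover have "(14 + 2 * nH TYPE('n)) * r = 14 * r + 2 * (r * nH TYPE('n))" by (simp add: algebra_simps)
    ultimately have "8 * r + 6 * r^2 \<le> (14 + 2 * nH TYPE('n)) * r" by linarith
    thus ?thesis using A by (simp add: r_def)
  next
    case False
    hence "2 * nH TYPE('n) \<le> (14 + 2 * nH TYPE('n)) * r" using nHp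
      by (smt (verit) mult_le_cancel_left1 mult_nonneg_nonneg)
    thus ?thesis using B by (simp add: r_def)
  qed
qed


definition hp :: "nat list \<Rightarrow> (nat \<Rightarrow> real^'n) \<Rightarrow> real^'n^'n" where
  "hp xs W = foldr (\<lambda>l A. householder (W l) ** A) xs (mat 1)"

lemma hp_Nil[simp]: "hp [] W = mat 1" by (simp add: hp_def)
lemma hp_Cons[simp]: "hp (x # xs) W = householder (W x) ** hp xs W" by (simp add: hp_def)

lemma hprod_hp: "hprod L V = hp [1..<Suc L] V" by (simp add: hprod_def hp_def)

primrec dhp :: "nat list \<Rightarrow> (nat \<Rightarrow> real^'n) \<Rightarrow> (nat \<Rightarrow> real^'n) \<Rightarrow> real^'n^'n" where
  "dhp [] W D = 0"
| "dhp (x # xs) W D = dH (W x) (D x) ** hp xs W + householder (W x) ** dhp xs W D"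

lemma hp_cong: "(\<And>l. l \<in> set xs \<Longrightarrow> W l = W' l) \<Longrightarrow> hp xs W = hp xs W'"
  by (induction xs) auto

lemma dhp_cong: "(\<And>l. l \<in> set xs \<Longrightarrow> W l = W' l) \<Longrightarrow> (\<And>l. l \<in> set xs \<Longrightarrow> D l = D' l)
   \<Longrightarrow> dhp xs W D = dhp xs W' D'"
proof (induction xs)
  case (Cons a xs)
  have "hp xs W = hp xs W'" using Cons.prems by (intro hp_cong) auto
  thus ?case using Cons by auto
qed simp

lemma nH_ge1: "nH TYPE('n::finite) \<ge> 1"
  by (simp add: nH_def)

lemma norm_hp: "norm (hp xs (W :: nat \<Rightarrow> real^'n)) \<le> nH TYPE('n) ^ Suc (length xs)"
proof (induction xs)
  case Nil thus ?case by (simp add: nH_def)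
next
  case (Cons x xs)
  have "norm (hp (x # xs) W) \<le> norm (householder (W x)) * norm (hp xs W)"
    by (simp add: norm_mmul_le)
  also have "\<dots> \<le> nH TYPE('n) * nH TYPE('n) ^ Suc (length xs)"
    using Cons norm_householder[of "W x"] nH_pos[where 'n='n] by (intro mult_mono) auto
  finally show ?case by simp
qed

lemma hp_deriv:
  fixes p :: "'a::real_normed_vector \<Rightarrow> nat \<Rightarrow> real^'n"
  assumes "\<And>l. l \<in> set xs \<Longrightarrow> p x l \<noteq> 0"
    and "\<And>l. l \<in> set xs \<Longrightarrow> ((\<lambda>y. p y l) has_derivative Dp l) (at x within S)"
  shows "((\<lambda>y. hp xs (p y)) has_derivative (\<lambda>h. dhp xs (p x) (\<lambda>l. Dp l h))) (at x within S)"
  using assms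
proof (induction xs)
  case Nil thus ?case by simp
next
  case (Cons a xs)
  have IH: "((\<lambda>y. hp xs (p y)) has_derivative (\<lambda>h. dhp xs (p x) (\<lambda>l. Dp l h))) (at x within S)"
    using Cons by auto
  have H: "((\<lambda>y. householder (p y a)) has_derivative (\<lambda>h. dH (p x a) (Dp a h))) (at x within S)"
    using Cons.prems by (intro has_derivative_compose[OF _ householder_deriv]) auto
  have "((\<lambda>y. householder (p y a) ** hp xs (p y)) has_derivative
     (\<lambda>h. householder (p x a) ** dhp xs (p x) (\<lambda>l. Dp l h) + dH (p x a) (Dp a h) ** hp xs (p x))) (at x within S)"
    by (rule bounded_bilinear.FDERIV[OF bb_mm H IH])
  thus ?case by (simp add: add.commute)
qed

lemma dhp_zero: "(\<And>l. l \<in> set xs \<Longrightarrow> dH (W l) (D l) = 0) \<Longrightarrow> dhp xs W D = 0"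
  by (induction xs) auto

lemma dhp_decomp:
  assumes "distinct xs"
  shows "dhp xs W D = (\<Sum>l\<in>set xs. dhp xs W (\<lambda>m. if m = l then D l else 0))"
  using assms
proof (induction xs)
  case Nil thus ?case by simp
next
  case (Cons x xs)
  have x: "x \<notin> set xs" using Cons by simp
  have 0: "dhp xs W (\<lambda>m. if m = x then D x else 0) = 0"
    using x by (intro dhp_zero) (auto simp: dH_zero)
  have "(\<Sum>l\<in>set (x # xs). dhp (x # xs) W (\<lambda>m. if m = l then D l else 0))
     = dhp (x # xs) W (\<lambda>m. if m = x then D x else 0) + (\<Sum>l\<in>set xs. dhp (x # xs) W (\<lambda>m. if m = l then D l else 0))"
    using x by (simp add: sum.insert)
  also have "(\<Sum>l\<in>set xs. dhp (x # xs) W (\<lambda>m. if m = l then D l else 0))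
     = (\<Sum>l\<in>set xs. householder (W x) ** dhp xs W (\<lambda>m. if m = l then D l else 0))"
    using x by (intro sum.cong) (auto simp: dH_zero)
  also have "\<dots> = householder (W x) ** dhp xs W D"
    using Cons by (simp add: bounded_bilinear.sum_right[OF bb_mm])
  finally show ?case using 0 by simp
qed

lemma ratio_le: "c > 0 \<Longrightarrow> c \<le> norm w \<Longrightarrow> norm d \<le> S \<Longrightarrow> norm d / norm w \<le> S / (c::real)"
  by (rule frac_le) (auto intro: order_trans[OF norm_ge_zero])

lemma dhp_bound:
  "\<exists>K\<ge>0. \<forall>(W::nat \<Rightarrow> real^'n) D S c. c > 0 \<longrightarrow> S \<ge> 0 \<longrightarrow>
     (\<forall>l\<in>set xs. c \<le> norm (W l) \<and> norm (D l) \<le> S) \<longrightarrow> norm (dhp xs W D) \<le> K * (S / c)"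
proof (induction xs)
  case Nil thus ?case by (intro exI[of _ 0]) simp
next
  case (Cons x xs)
  then obtain K where K: "K \<ge> 0" "\<And>(W::nat \<Rightarrow> real^'n) D S c. c > 0 \<Longrightarrow> S \<ge> 0 \<Longrightarrow>
     (\<forall>l\<in>set xs. c \<le> norm (W l) \<and> norm (D l) \<le> S) \<Longrightarrow> norm (dhp xs W D) \<le> K * (S / c)" by blast
  let ?n = "nH TYPE('n)"
  show ?case
  proof (intro exI[of _ "8 * ?n ^ Suc (length xs) + ?n * K"] conjI allI impI)
    show "0 \<le> 8 * ?n ^ Suc (length xs) + ?n * K" using K nH_pos[where 'n='n] by simp
    fix W D :: "nat \<Rightarrow> real^'n" and S c :: real
    assume c: "c > 0" and S: "S \<ge> 0" and h: "\<forall>l\<in>set (x # xs). c \<le> norm (W l) \<and> norm (D l) \<le> S"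
    have r: "norm (D x) / norm (W x) \<le> S / c" using h c by (intro ratio_le) auto
    have "norm (dH (W x) (D x) ** hp xs W) \<le> norm (dH (W x) (D x)) * norm (hp xs W)"
      by (rule norm_mmul_le)
    also have "\<dots> \<le> (8 * (S / c)) * ?n ^ Suc (length xs)"
      using norm_dH[of "W x" "D x"] r norm_hp[of xs W] c S
      by (intro mult_mono) auto
    finally have t1: "norm (dH (W x) (D x) ** hp xs W) \<le> 8 * ?n ^ Suc (length xs) * (S / c)" by (simp add: mult_ac)
    have "norm (householder (W x) ** dhp xs W D) \<le> norm (householder (W x)) * norm (dhp xs W D)"
      by (rule norm_mmul_le)
    also have "\<dots> \<le> ?n * (K * (S / c))"
      using norm_householder[of "W x"] K(2)[of c S W D] h c S nH_pos[where 'n='n] by (intro mult_mono) auto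
    finally have t2: "norm (householder (W x) ** dhp xs W D) \<le> ?n * K * (S / c)" by simp
    show "norm (dhp (x # xs) W D) \<le> (8 * ?n ^ Suc (length xs) + ?n * K) * (S / c)"
      using norm_triangle_ineq[of "dH (W x) (D x) ** hp xs W" "householder (W x) ** dhp xs W D"] t1 t2
      by (simp only: distrib_right dhp.simps)
  qed
qed

lemma orth_norm_ge: "w \<bullet> d = 0 \<Longrightarrow> norm w \<le> norm (w + d)"
proof -
  assume "w \<bullet> d = 0"
  hence "(norm (w + d))^2 = (norm w)^2 + (norm d)^2"
    using norm_add_Pythagorean[of w d] by (simp add: orthogonal_def)
  hence "(norm w)^2 \<le> (norm (w + d))^2" by simp
  thus ?thesis by (simp add: power2_le_iff_abs_le)
qed

lemma hp_first:
  "\<exists>K\<ge>0. \<forall>(W::nat \<Rightarrow> real^'n) D S c. c > 0 \<longrightarrow> S \<ge> 0 \<longrightarrow>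
     (\<forall>l\<in>set xs. c \<le> norm (W l) \<and> norm (D l) \<le> S \<and> W l \<bullet> D l = 0) \<longrightarrow>
     norm (hp xs (\<lambda>l. W l + D l) - hp xs W) \<le> K * (S / c)"
proof (induction xs)
  case Nil thus ?case by (intro exI[of _ 0]) simp
next
  case (Cons x xs)
  then obtain K where K: "K \<ge> 0" "\<And>(W::nat \<Rightarrow> real^'n) D S c. c > 0 \<Longrightarrow> S \<ge> 0 \<Longrightarrow>
     (\<forall>l\<in>set xs. c \<le> norm (W l) \<and> norm (D l) \<le> S \<and> W l \<bullet> D l = 0) \<Longrightarrow>
     norm (hp xs (\<lambda>l. W l + D l) - hp xs W) \<le> K * (S / c)" by blast
  let ?n = "nH TYPE('n)"
  show ?case
  proof (intro exI[of _ "(14 + 2 * ?n) * ?n ^ Suc (length xs) + ?n * K"] conjI allI impI)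
    show "0 \<le> (14 + 2 * ?n) * ?n ^ Suc (length xs) + ?n * K" using K nH_pos[where 'n='n] by simp
    fix W D :: "nat \<Rightarrow> real^'n" and S c :: real
    assume c: "c > 0" and S: "S \<ge> 0" and h: "\<forall>l\<in>set (x # xs). c \<le> norm (W l) \<and> norm (D l) \<le> S \<and> W l \<bullet> D l = 0"
    have r: "norm (D x) / norm (W x) \<le> S / c" using h c by (intro ratio_le) auto
    have w0: "W x \<noteq> 0" using h c by auto
    let ?H1 = "householder (W x + D x)" and ?H0 = "householder (W x)"
    let ?Q1 = "hp xs (\<lambda>l. W l + D l)" and ?Q0 = "hp xs W"
    have eq: "hp (x # xs) (\<lambda>l. W l + D l) - hp (x # xs) W = (?H1 - ?H0) ** ?Q1 + ?H0 ** (?Q1 - ?Q0)"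
      by (simp add: bounded_bilinear.diff_left[OF bb_mm] bounded_bilinear.diff_right[OF bb_mm])
    have "norm ((?H1 - ?H0) ** ?Q1) \<le> norm (?H1 - ?H0) * norm ?Q1" by (rule norm_mmul_le)
    also have "\<dots> \<le> ((14 + 2 * ?n) * (S / c)) * ?n ^ Suc (length xs)"
    proof (intro mult_mono)
      show "norm (?H1 - ?H0) \<le> (14 + 2 * ?n) * (S / c)"
        using householder_first[OF w0, of "D x"] h r nH_pos[where 'n='n]
        by (smt (verit) list.set_intros(1) mult_left_mono)
    qed (use norm_hp[of xs] c S nH_pos[where 'n='n] in auto)
    finally have t1: "norm ((?H1 - ?H0) ** ?Q1) \<le> (14 + 2 * ?n) * ?n ^ Suc (length xs) * (S / c)" by (simp add: mult_ac)
    have "norm (?H0 ** (?Q1 - ?Q0)) \<le> norm ?H0 * norm (?Q1 - ?Q0)" by (rule norm_mmul_le)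
    also have "\<dots> \<le> ?n * (K * (S / c))"
      using norm_householder[of "W x"] K(2)[of c S W D] h c S nH_pos[where 'n='n] by (intro mult_mono) auto
    finally have t2: "norm (?H0 ** (?Q1 - ?Q0)) \<le> ?n * K * (S / c)" by simp
    show "norm (hp (x # xs) (\<lambda>l. W l + D l) - hp (x # xs) W) \<le> ((14 + 2 * ?n) * ?n ^ Suc (length xs) + ?n * K) * (S / c)"
      unfolding eq using norm_triangle_ineq[of "(?H1 - ?H0) ** ?Q1" "?H0 ** (?Q1 - ?Q0)"] t1 t2
      by (simp only: distrib_right)
  qed
qed

lemma hp_second:
  "\<exists>K\<ge>0. \<forall>(W::nat \<Rightarrow> real^'n) D S c. c > 0 \<longrightarrow> S \<ge> 0 \<longrightarrow>
     (\<forall>l\<in>set xs. c \<le> norm (W l) \<and> norm (D l) \<le> S \<and> W l \<bullet> D l = 0) \<longrightarrow>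
     norm (hp xs (\<lambda>l. W l + D l) - hp xs W - dhp xs W D) \<le> K * (S / c)^2"
proof (induction xs)
  case Nil thus ?case by (intro exI[of _ 0]) simp
next
  case (Cons x xs)
  then obtain K where K: "K \<ge> 0" "\<And>(W::nat \<Rightarrow> real^'n) D S c. c > 0 \<Longrightarrow> S \<ge> 0 \<Longrightarrow>
     (\<forall>l\<in>set xs. c \<le> norm (W l) \<and> norm (D l) \<le> S \<and> W l \<bullet> D l = 0) \<Longrightarrow>
     norm (hp xs (\<lambda>l. W l + D l) - hp xs W - dhp xs W D) \<le> K * (S / c)^2" by blast
  obtain K1 where K1: "K1 \<ge> 0" "\<And>(W::nat \<Rightarrow> real^'n) D S c. c > 0 \<Longrightarrow> S \<ge> 0 \<Longrightarrow>
     (\<forall>l\<in>set xs. c \<le> norm (W l) \<and> norm (D l) \<le> S \<and> W l \<bullet> D l = 0) \<Longrightarrow>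
     norm (hp xs (\<lambda>l. W l + D l) - hp xs W) \<le> K1 * (S / c)"
    using hp_first[of xs] by blast
  let ?n = "nH TYPE('n)"
  show ?case
  proof (intro exI[of _ "6 * ?n ^ Suc (length xs) + 8 * K1 + ?n * K"] conjI allI impI)
    show "0 \<le> 6 * ?n ^ Suc (length xs) + 8 * K1 + ?n * K" using K K1 nH_pos[where 'n='n] by simp
    fix W D :: "nat \<Rightarrow> real^'n" and S c :: real
    assume c: "c > 0" and S: "S \<ge> 0" and h: "\<forall>l\<in>set (x # xs). c \<le> norm (W l) \<and> norm (D l) \<le> S \<and> W l \<bullet> D l = 0"
    have r: "norm (D x) / norm (W x) \<le> S / c" using h c by (intro ratio_le) auto
    have r0: "0 \<le> norm (D x) / norm (W x)" by simp
    have w0: "W x \<noteq> 0" using h c by auto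
    let ?H1 = "householder (W x + D x)" and ?H0 = "householder (W x)" and ?dH = "dH (W x) (D x)"
    let ?Q1 = "hp xs (\<lambda>l. W l + D l)" and ?Q0 = "hp xs W" and ?dQ = "dhp xs W D"
    have eq: "hp (x # xs) (\<lambda>l. W l + D l) - hp (x # xs) W - dhp (x # xs) W D
       = (?H1 - ?H0 - ?dH) ** ?Q1 + ?dH ** (?Q1 - ?Q0) + ?H0 ** (?Q1 - ?Q0 - ?dQ)"
      by (simp add: bounded_bilinear.diff_left[OF bb_mm] bounded_bilinear.diff_right[OF bb_mm] bounded_bilinear.add_left[OF bb_mm] bounded_bilinear.add_right[OF bb_mm] algebra_simps)
    have "norm ((?H1 - ?H0 - ?dH) ** ?Q1) \<le> norm (?H1 - ?H0 - ?dH) * norm ?Q1" by (rule norm_mmul_le)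
    also have "\<dots> \<le> (6 * (S / c)^2) * ?n ^ Suc (length xs)"
    proof (intro mult_mono)
      have "(norm (D x) / norm (W x))^2 \<le> (S / c)^2" using r r0 by (rule power_mono)
      thus "norm (?H1 - ?H0 - ?dH) \<le> 6 * (S / c)^2"
        using householder_second[OF w0, of "D x"] h by auto
    qed (use norm_hp[of xs] c S nH_pos[where 'n='n] in auto)
    finally have t1: "norm ((?H1 - ?H0 - ?dH) ** ?Q1) \<le> 6 * ?n ^ Suc (length xs) * (S / c)^2" by (simp add: mult_ac)
    have "norm (?dH ** (?Q1 - ?Q0)) \<le> norm ?dH * norm (?Q1 - ?Q0)" by (rule norm_mmul_le)
    also have "\<dots> \<le> (8 * (S / c)) * (K1 * (S / c))"
    proof (intro mult_mono)
      show "norm ?dH \<le> 8 * (S / c)" using norm_dH[of "W x" "D x"] r by simp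
      show "norm (?Q1 - ?Q0) \<le> K1 * (S / c)" using K1(2)[of c S W D] h c S by auto
    qed (use c S in auto)
    finally have t2: "norm (?dH ** (?Q1 - ?Q0)) \<le> 8 * K1 * (S / c)^2" by (simp add: power2_eq_square mult_ac)
    have "norm (?H0 ** (?Q1 - ?Q0 - ?dQ)) \<le> norm ?H0 * norm (?Q1 - ?Q0 - ?dQ)" by (rule norm_mmul_le)
    also have "\<dots> \<le> ?n * (K * (S / c)^2)"
      using norm_householder[of "W x"] K(2)[of c S W D] h c S nH_pos[where 'n='n] by (intro mult_mono) auto
    finally have t3: "norm (?H0 ** (?Q1 - ?Q0 - ?dQ)) \<le> ?n * K * (S / c)^2" by simp
    have "norm ((?H1 - ?H0 - ?dH) ** ?Q1 + ?dH ** (?Q1 - ?Q0) + ?H0 ** (?Q1 - ?Q0 - ?dQ))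
      \<le> norm ((?H1 - ?H0 - ?dH) ** ?Q1) + norm (?dH ** (?Q1 - ?Q0)) + norm (?H0 ** (?Q1 - ?Q0 - ?dQ))"
      by (rule norm_triangle_le) (rule add_mono[OF norm_triangle_ineq order_refl])
    thus "norm (hp (x # xs) (\<lambda>l. W l + D l) - hp (x # xs) W - dhp (x # xs) W D)
      \<le> (6 * ?n ^ Suc (length xs) + 8 * K1 + ?n * K) * (S / c)^2"
      unfolding eq using t1 t2 t3 by (simp only: distrib_right)
  qed
qed


declare upt_Suc[simp del]

definition adjf :: "('a::euclidean_space \<Rightarrow> 'b::real_inner) \<Rightarrow> 'b \<Rightarrow> 'a" where
  "adjf A y = (\<Sum>b\<in>Basis. (A b \<bullet> y) *\<^sub>R b)"

lemma adjf_inner: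
  fixes A :: "'a::euclidean_space \<Rightarrow> 'b::real_inner"
  assumes "linear A"
  shows "x \<bullet> adjf A y = A x \<bullet> y"
proof -
  interpret linear A by fact
  have "A x \<bullet> y = A (\<Sum>b\<in>Basis. (x \<bullet> b) *\<^sub>R b) \<bullet> y"
    by (simp add: euclidean_representation)
  also have "\<dots> = (\<Sum>b\<in>Basis. (x \<bullet> b) *\<^sub>R A b) \<bullet> y"
    by (simp add: sum scale)
  finally show ?thesis
    by (simp add: adjf_def inner_sum_left inner_sum_right mult.commute)
qed

lemma adjf_norm:
  fixes A :: "'a::euclidean_space \<Rightarrow> 'b::real_inner"
  assumes "linear A" and K: "\<And>x. norm (A x) \<le> K * norm x"
  shows "norm (adjf A y) \<le> K * norm y"
proof -
  let ?z = "adjf A y"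
  have "(norm ?z)^2 = ?z \<bullet> ?z" by (simp add: power2_norm_eq_inner)
  also have "\<dots> = A ?z \<bullet> y" by (rule adjf_inner[OF assms(1)])
  also have "\<dots> \<le> norm (A ?z) * norm y" by (rule norm_cauchy_schwarz)
  also have "\<dots> \<le> K * norm ?z * norm y" using K[of ?z] by (simp add: mult_right_mono)
  finally have *: "norm ?z * norm ?z \<le> norm ?z * (K * norm y)" by (simp add: power2_eq_square mult_ac)
  show ?thesis
  proof (cases "norm ?z = 0")
    case True
    have "0 \<le> K * norm y"
    proof -
      obtain b :: 'a where b: "b \<in> Basis" using nonempty_Basis by blast
      hence b0: "b \<noteq> 0" by (auto simp: nonzero_Basis)
      hence "0 \<le> K * norm b" using K[of b] by (meson norm_ge_zero order_trans)
      hence "K \<ge> 0" using b0 by (simp add: zero_le_mult_iff)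
      thus ?thesis by simp
    qed
    thus ?thesis using True by simp
  next
    case False
    hence "norm ?z > 0" by simp
    thus ?thesis using * by (simp add: mult_le_cancel_left_pos)
  qed
qed

lemma grad_eq:
  fixes g :: "'a::euclidean_space \<Rightarrow> real"
  assumes "(g has_derivative (\<lambda>h. h \<bullet> D)) (at x)"
  shows "grad g x = D"
proof -
  have ex: "GDERIV g x :> D" using assms by (simp add: gderiv_def)
  have "GDERIV g x :> grad g x" unfolding grad_def by (rule someI[of _ D]) (rule ex)
  hence "(g has_derivative (\<lambda>h. h \<bullet> grad g x)) (at x)" by (simp add: gderiv_def)
  hence "(\<lambda>h. h \<bullet> grad g x) = (\<lambda>h. h \<bullet> D)" using assms by (rule has_derivative_unique)
  hence "(grad g x - D) \<bullet> grad g x = (grad g x - D) \<bullet> D" by (rule fun_cong)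
  hence "(grad g x - D) \<bullet> (grad g x - D) = 0" by (simp add: inner_diff_right)
  thus ?thesis by simp
qed

lemma grad_works:
  fixes g :: "'a::euclidean_space \<Rightarrow> real"
  assumes "g differentiable (at x)"
  shows "(g has_derivative (\<lambda>h. h \<bullet> grad g x)) (at x)"
proof -
  obtain G where G: "(g has_derivative G) (at x)" using assms by (auto simp: differentiable_def)
  have lin: "linear G" using G has_derivative_linear by blast
  have "G = (\<lambda>h. h \<bullet> adjf G 1)"
    by (auto simp: fun_eq_iff adjf_inner[OF lin])
  hence G': "(g has_derivative (\<lambda>h. h \<bullet> adjf G 1)) (at x)" using G by simp
  thus ?thesis using grad_eq[OF G'] by simp
qed

definition Dl :: "nat list \<Rightarrow> (nat \<Rightarrow> real^'n) \<Rightarrow> nat \<Rightarrow> real^'n \<Rightarrow> real^'n^'n" where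
  "Dl xs W l d = dhp xs W (\<lambda>m. if m = l then d else 0)"

lemma Dl_deriv:
  assumes "\<And>m. m \<in> set xs \<Longrightarrow> W m \<noteq> 0"
  shows "((\<lambda>w. hp xs (W(l := w))) has_derivative Dl xs W l) (at (W l))"
proof -
  have "((\<lambda>w. hp xs (W(l := w))) has_derivative
      (\<lambda>h. dhp xs ((W(l := W l))) (\<lambda>m. (\<lambda>m h. if m = l then h else 0) m h))) (at (W l))"
  proof (rule hp_deriv)
    fix m assume "m \<in> set xs"
    show "(W(l := W l)) m \<noteq> 0" using assms \<open>m \<in> set xs\<close> by simp
    show "((\<lambda>y. (W(l := y)) m) has_derivative (\<lambda>m h. if m = l then h else 0) m) (at (W l) within UNIV)"
      by (cases "m = l") (auto intro: derivative_eq_intros)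
  qed
  thus ?thesis by (simp add: Dl_def[abs_def])
qed

lemma Dl_linear: "(\<And>m. m \<in> set xs \<Longrightarrow> W m \<noteq> 0) \<Longrightarrow> linear (Dl xs W l)"
  using Dl_deriv has_derivative_linear by blast

lemma set_upt_1L: "set [1..<Suc L] = {1..L}" by auto

lemma pgrad_char:
  assumes V: "\<forall>m\<in>{1..L}. V m \<noteq> 0" and g: "g differentiable (at (hprod L V))"
  shows "pgrad g L V l = adjf (Dl [1..<Suc L] V l) (grad g (hprod L V))"
proof -
  let ?xs = "[1..<Suc L]"
  have V': "\<And>m. m \<in> set ?xs \<Longrightarrow> V m \<noteq> 0" by (metis V set_upt_1L)
  have lin: "linear (Dl ?xs V l)" by (rule Dl_linear) (use V' in auto)
  have D1: "((\<lambda>w. hp ?xs (V(l := w))) has_derivative Dl ?xs V l) (at (V l))"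
    by (rule Dl_deriv) (use V' in auto)
  have "((\<lambda>w. g (hp ?xs (V(l := w)))) has_derivative (\<lambda>h. Dl ?xs V l h \<bullet> grad g (hprod L V))) (at (V l))"
  proof -
    have G: "(g has_derivative (\<lambda>h. h \<bullet> grad g (hprod L V))) (at (hp ?xs (V(l := V l))))"
      using grad_works[OF g] by (simp add: hprod_hp)
    show ?thesis using has_derivative_compose[OF D1 G] by (simp add: fun_upd_def)
  qed
  also have "(\<lambda>h. Dl ?xs V l h \<bullet> grad g (hprod L V)) = (\<lambda>h. h \<bullet> adjf (Dl ?xs V l) (grad g (hprod L V)))"
    by (simp only: adjf_inner[OF lin])
  finally show ?thesis unfolding pgrad_def hprod_hp by (rule grad_eq)
qed

lemma Dl_self: "Dl xs W l (W l) = 0"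
  unfolding Dl_def by (rule dhp_zero) (auto simp: dH_self dH_zero)

lemma pgrad_orth:
  assumes V: "\<forall>m\<in>{1..L}. V m \<noteq> 0" and g: "g differentiable (at (hprod L V))"
  shows "V l \<bullet> pgrad g L V l = 0"
proof -
  have V': "\<And>m. m \<in> set [1..<Suc L] \<Longrightarrow> V m \<noteq> 0" by (metis V set_upt_1L)
  have lin: "linear (Dl [1..<Suc L] V l)" by (rule Dl_linear) (use V' in auto)
  show ?thesis unfolding pgrad_char[OF V g] adjf_inner[OF lin] Dl_self
    by (simp only: inner_zero_left)
qed

lemma Dl_bound:
  "\<exists>K\<ge>0. \<forall>(W::nat \<Rightarrow> real^'n) c l d. c > 0 \<longrightarrow> (\<forall>m\<in>set xs. c \<le> norm (W m)) \<longrightarrow>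
     norm (Dl xs W l d) \<le> K * (norm d / c)"
proof -
  obtain K where K: "K \<ge> 0" "\<And>(W::nat \<Rightarrow> real^'n) D S c. c > 0 \<Longrightarrow> S \<ge> 0 \<Longrightarrow>
     (\<forall>l\<in>set xs. c \<le> norm (W l) \<and> norm (D l) \<le> S) \<Longrightarrow> norm (dhp xs W D) \<le> K * (S / c)"
    using dhp_bound[of xs] by blast
  show ?thesis
  proof (intro exI[of _ K] conjI allI impI)
    fix W :: "nat \<Rightarrow> real^'n" and c l d
    assume "c > 0" "\<forall>m\<in>set xs. c \<le> norm (W m)"
    thus "norm (Dl xs W l d) \<le> K * (norm d / c)" unfolding Dl_def by (intro K(2)) auto
  qed (rule K(1))
qed


lemma hp_orth: "(\<And>m. m \<in> set xs \<Longrightarrow> W m \<noteq> 0) \<Longrightarrow> orthogonal_matrix (hp xs W)"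
  by (induction xs) (auto simp: orthogonal_matrix_id orthogonal_matrix_mul householder_orth)

lemma dH_scale: "dH v (h *\<^sub>R d) = h *\<^sub>R dH v d"
  by (simp add: dH_def bounded_bilinear.scaleR_left[OF bb_outer] bounded_bilinear.scaleR_right[OF bb_outer]
      algebra_simps)

lemma dhp_scale: "dhp xs W (\<lambda>m. h *\<^sub>R D m) = h *\<^sub>R dhp xs W D"
  by (induction xs) (auto simp: dH_scale scalar_matrix_assoc matrix_scalar_ac algebra_simps)

lemma dhp_sum_pgrad:
  assumes V: "\<forall>m\<in>{1..L}. V m \<noteq> 0" and g: "g differentiable (at (hprod L V))"
  shows "grad g (hprod L V) \<bullet> dhp [1..<Suc L] V D = (\<Sum>l=1..L. pgrad g L V l \<bullet> D l)"
proof -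
  let ?xs = "[1..<Suc L]"
  have V': "\<And>m. m \<in> set ?xs \<Longrightarrow> V m \<noteq> 0" by (metis V set_upt_1L)
  have "grad g (hprod L V) \<bullet> dhp ?xs V D
     = (\<Sum>l\<in>set ?xs. grad g (hprod L V) \<bullet> Dl ?xs V l (D l))"
    by (subst dhp_decomp) (simp_all only: distinct_upt Dl_def inner_sum_right)
  also have "\<dots> = (\<Sum>l\<in>set ?xs. pgrad g L V l \<bullet> D l)"
  proof (rule sum.cong)
    fix l assume "l \<in> set ?xs"
    have lin: "linear (Dl ?xs V l)" by (rule Dl_linear) (use V' in auto)
    show "grad g (hprod L V) \<bullet> Dl ?xs V l (D l) = pgrad g L V l \<bullet> D l"
      unfolding pgrad_char[OF V g] by (simp only: inner_commute[of _ "D l"] adjf_inner[OF lin] inner_commute)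
  qed simp
  finally show ?thesis by (simp only: set_upt_1L)
qed

lemma descent:
  fixes f :: "real^'n^'n \<Rightarrow> real" and L :: nat
  assumes fd: "\<forall>X. f differentiable (at X)"
    and M1: "M1 \<ge> 0"
    and lip: "\<forall>X1 X2. orthogonal_matrix X1 \<longrightarrow> orthogonal_matrix X2 \<longrightarrow>
                 norm (grad f X1 - grad f X2) \<le> M1 * norm (X1 - X2)"
  shows "\<exists>C\<ge>0. \<forall>(V::nat\<Rightarrow>real^'n) D S c. c > 0 \<longrightarrow> S \<ge> 0 \<longrightarrow>
     (\<forall>m\<in>{1..L}. c \<le> norm (V m) \<and> norm (D m) \<le> S \<and> V m \<bullet> D m = 0) \<longrightarrow>
     f (hprod L (\<lambda>m. V m + D m)) \<le> f (hprod L V) + (\<Sum>l=1..L. pgrad f L V l \<bullet> D l) + C * (S / c)^2"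
proof -
  let ?xs = "[1..<Suc L]"
  obtain Kd where Kd: "Kd \<ge> 0" "\<And>(W::nat \<Rightarrow> real^'n) D S c. c > 0 \<Longrightarrow> S \<ge> 0 \<Longrightarrow>
     (\<forall>l\<in>set ?xs. c \<le> norm (W l) \<and> norm (D l) \<le> S) \<Longrightarrow> norm (dhp ?xs W D) \<le> Kd * (S / c)"
    using dhp_bound[of ?xs] by blast
  obtain K1 where K1: "K1 \<ge> 0" "\<And>(W::nat \<Rightarrow> real^'n) D S c. c > 0 \<Longrightarrow> S \<ge> 0 \<Longrightarrow>
     (\<forall>l\<in>set ?xs. c \<le> norm (W l) \<and> norm (D l) \<le> S \<and> W l \<bullet> D l = 0) \<Longrightarrow>
     norm (hp ?xs (\<lambda>l. W l + D l) - hp ?xs W) \<le> K1 * (S / c)"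
    using hp_first[of ?xs] by blast
  obtain K2 where K2: "K2 \<ge> 0" "\<And>(W::nat \<Rightarrow> real^'n) D S c. c > 0 \<Longrightarrow> S \<ge> 0 \<Longrightarrow>
     (\<forall>l\<in>set ?xs. c \<le> norm (W l) \<and> norm (D l) \<le> S \<and> W l \<bullet> D l = 0) \<Longrightarrow>
     norm (hp ?xs (\<lambda>l. W l + D l) - hp ?xs W - dhp ?xs W D) \<le> K2 * (S / c)^2"
    using hp_second[of ?xs] by blast
  define B where "B = norm (grad f (mat 1)) + M1 * (nH TYPE('n) ^ Suc (length ?xs) + norm (mat 1 :: real^'n^'n))"
  have B0: "B \<ge> 0" using M1 nH_pos[where 'n='n] by (simp add: B_def)
  have gB: "norm (grad f (hp ?xs W)) \<le> B" if "\<And>m. m \<in> set ?xs \<Longrightarrow> W m \<noteq> 0" for W :: "nat \<Rightarrow> real^'n"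
  proof -
    have o: "orthogonal_matrix (hp ?xs W)" by (rule hp_orth) (use that in auto)
    have "norm (grad f (hp ?xs W)) \<le> norm (grad f (mat 1)) + norm (grad f (hp ?xs W) - grad f (mat 1))"
      by (metis norm_triangle_sub add.commute)
    also have "norm (grad f (hp ?xs W) - grad f (mat 1)) \<le> M1 * norm (hp ?xs W - mat 1)"
      using lip o orthogonal_matrix_id by blast
    also have "norm (hp ?xs W - mat 1) \<le> nH TYPE('n) ^ Suc (length ?xs) + norm (mat 1 :: real^'n^'n)"
      using norm_triangle_ineq4[of "hp ?xs W" "mat 1"] norm_hp[of ?xs W] by linarith
    finally show ?thesis unfolding B_def using M1 by (simp add: mult_left_mono)
  qed
  show ?thesis
  proof (intro exI[of _ "Kd * M1 * K1 + B * K2"] conjI allI impI)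
    show "0 \<le> Kd * M1 * K1 + B * K2" using Kd K1 K2 M1 B0 by simp
    fix V D :: "nat \<Rightarrow> real^'n" and S c :: real
    assume c: "c > 0" and S: "S \<ge> 0" and h: "\<forall>m\<in>{1..L}. c \<le> norm (V m) \<and> norm (D m) \<le> S \<and> V m \<bullet> D m = 0"
    have h': "\<And>m. m \<in> set ?xs \<Longrightarrow> c \<le> norm (V m) \<and> norm (D m) \<le> S \<and> V m \<bullet> D m = 0"
      using h by (metis set_upt_1L)
    have cge: "c \<le> norm (V m + t *\<^sub>R D m)" if "m \<in> set ?xs" for m t
      using h'[OF that] orth_norm_ge[of "V m" "t *\<^sub>R D m"] by auto
    have nz: "V m + t *\<^sub>R D m \<noteq> 0" if "m \<in> set ?xs" for m t
      using cge[OF that, of t] c by auto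
    define X where "X t = hp ?xs (\<lambda>m. V m + t *\<^sub>R D m)" for t
    define dX where "dX t = dhp ?xs (\<lambda>m. V m + t *\<^sub>R D m) D" for t
    have X0: "X 0 = hp ?xs V" by (simp add: X_def)
    have X1: "X 1 = hprod L (\<lambda>m. V m + D m)" by (simp add: X_def hprod_hp)
    have Xd: "(X has_derivative (\<lambda>h. h *\<^sub>R dX t)) (at t)" for t
    proof -
      have "((\<lambda>t. hp ?xs (\<lambda>m. V m + t *\<^sub>R D m)) has_derivative
              (\<lambda>h. dhp ?xs (\<lambda>m. V m + t *\<^sub>R D m) (\<lambda>m. (\<lambda>m h. h *\<^sub>R D m) m h))) (at t within UNIV)"
        by (rule hp_deriv) (auto simp: nz intro!: derivative_eq_intros)
      thus ?thesis unfolding X_def[abs_def] dX_def by (simp add: dhp_scale)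
    qed
    have Xo: "orthogonal_matrix (X t)" for t unfolding X_def by (rule hp_orth) (use nz in auto)
    define g0 where "g0 = grad f (X 0)"
    define \<psi> where "\<psi> t = f (X t) - g0 \<bullet> X t" for t
    have \<psi>d: "DERIV \<psi> t :> (dX t \<bullet> grad f (X t) - g0 \<bullet> dX t)" for t
    proof -
      have fX: "((\<lambda>t. f (X t)) has_derivative (\<lambda>h. (h *\<^sub>R dX t) \<bullet> grad f (X t))) (at t)"
        using has_derivative_compose[OF Xd grad_works] fd by blast
      have "(\<psi> has_derivative (\<lambda>h. (h *\<^sub>R dX t) \<bullet> grad f (X t) - g0 \<bullet> (h *\<^sub>R dX t))) (at t)"
        unfolding \<psi>_def[abs_def]
        by (intro has_derivative_diff fX bounded_linear.has_derivative[OF bounded_linear_inner_right Xd])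
      thus ?thesis by (rule has_derivative_imp_has_field_derivative) (simp add: algebra_simps)
    qed
    obtain \<xi> where \<xi>: "0 < \<xi>" "\<xi> < 1" "\<psi> 1 - \<psi> 0 = (1 - 0) * (dX \<xi> \<bullet> grad f (X \<xi>) - g0 \<bullet> dX \<xi>)"
      using MVT2[of 0 1 \<psi> "\<lambda>t. dX t \<bullet> grad f (X t) - g0 \<bullet> dX t"] \<psi>d by auto
    have ndX: "norm (dX \<xi>) \<le> Kd * (S / c)"
      unfolding dX_def using c S by (intro Kd(2)) (auto simp: cge h')
    have nXd: "norm (X \<xi> - X 0) \<le> K1 * (S / c)"
    proof -
      have "norm (hp ?xs (\<lambda>l. V l + \<xi> *\<^sub>R D l) - hp ?xs V) \<le> K1 * (S / c)"
      proof (rule K1(2)[OF c S, of V "\<lambda>l. \<xi> *\<^sub>R D l"], intro ballI conjI)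
        fix l assume l: "l \<in> set ?xs"
        show "c \<le> norm (V l)" "V l \<bullet> \<xi> *\<^sub>R D l = 0" using h'[OF l] by auto
        have "norm (\<xi> *\<^sub>R D l) = \<xi> * norm (D l)" using \<xi> by simp
        also have "\<dots> \<le> 1 * S" using \<xi> h'[OF l] by (intro mult_mono) auto
        finally show "norm (\<xi> *\<^sub>R D l) \<le> S" by simp
      qed
      thus ?thesis by (simp add: X_def)
    qed
    have "\<psi> 1 - \<psi> 0 = dX \<xi> \<bullet> (grad f (X \<xi>) - g0)" using \<xi>(3) by (simp add: inner_diff_right inner_commute)
    also have "\<dots> \<le> norm (dX \<xi>) * norm (grad f (X \<xi>) - g0)" by (rule norm_cauchy_schwarz)
    also have "\<dots> \<le> (Kd * (S / c)) * (M1 * (K1 * (S / c)))"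
    proof (rule mult_mono[OF ndX])
      have "norm (grad f (X \<xi>) - g0) \<le> M1 * norm (X \<xi> - X 0)" unfolding g0_def using lip Xo by blast
      also have "\<dots> \<le> M1 * (K1 * (S / c))" using nXd M1 by (rule mult_left_mono)
      finally show "norm (grad f (X \<xi>) - g0) \<le> M1 * (K1 * (S / c))" .
    qed (use Kd c S in auto)
    finally have t1: "\<psi> 1 - \<psi> 0 \<le> Kd * M1 * K1 * (S / c)^2" by (simp add: power2_eq_square mult_ac)
    have E: "norm (X 1 - X 0 - dhp ?xs V D) \<le> K2 * (S / c)^2"
      using K2(2)[OF c S, of V D] h' by (simp add: X_def)
    have "g0 \<bullet> (X 1 - X 0 - dhp ?xs V D) \<le> norm g0 * norm (X 1 - X 0 - dhp ?xs V D)"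
      by (rule norm_cauchy_schwarz)
    also have "\<dots> \<le> B * (K2 * (S / c)^2)"
    proof (rule mult_mono[OF _ E])
      show "norm g0 \<le> B" unfolding g0_def X0 by (rule gB) (use nz[of _ 0] in auto)
    qed (use B0 K2 in auto)
    finally have t2: "g0 \<bullet> (X 1 - X 0 - dhp ?xs V D) \<le> B * K2 * (S / c)^2" by simp
    have Vnz: "\<forall>m\<in>{1..L}. V m \<noteq> 0" using h c by force
    have dec: "g0 \<bullet> dhp ?xs V D = (\<Sum>l=1..L. pgrad f L V l \<bullet> D l)"
      unfolding g0_def X0 hprod_hp[symmetric] using dhp_sum_pgrad[OF Vnz] fd by blast
    have "f (X 1) = \<psi> 1 - \<psi> 0 + f (X 0) + g0 \<bullet> (X 1 - X 0 - dhp ?xs V D) + g0 \<bullet> dhp ?xs V D"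
      by (simp add: \<psi>_def inner_diff_right)
    thus "f (hprod L (\<lambda>m. V m + D m)) \<le> f (hprod L V) + (\<Sum>l=1..L. pgrad f L V l \<bullet> D l) + (Kd * M1 * K1 + B * K2) * (S / c)^2"
      using t1 t2 dec X0 X1 by (simp add: hprod_hp distrib_right)
  qed
qed


lemma distr_upd:
  assumes D: "prob_space D"
  shows "distr (D \<Otimes>\<^sub>M PiM UNIV (\<lambda>_::nat. D)) (PiM UNIV (\<lambda>_. D)) (\<lambda>(x, X). X(k := x)) = PiM UNIV (\<lambda>_. D)"
  using distr_pair_PiM_eq_PiM[of UNIV "\<lambda>_. D" k] D by simp

lemma meas_upd: "(\<lambda>(x, X). X(k := x)) \<in> measurable (D \<Otimes>\<^sub>M PiM UNIV (\<lambda>_::nat. D)) (PiM UNIV (\<lambda>_. D))"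
proof -
  have "(\<lambda>p i. (\<lambda>i p. if i = k then fst p else snd p i) i p) \<in> measurable (D \<Otimes>\<^sub>M PiM UNIV (\<lambda>_::nat. D)) (PiM UNIV (\<lambda>_. D))"
  proof (rule measurable_PiM_single')
    fix i :: nat
    show "(\<lambda>p. if i = k then fst p else snd p i) \<in> measurable (D \<Otimes>\<^sub>M PiM UNIV (\<lambda>_::nat. D)) D"
      by (cases "i = k") simp_all
  qed (auto simp: space_pair_measure space_PiM PiE_iff)
  moreover have "(\<lambda>p i. (\<lambda>i p. if i = k then fst p else snd p i) i p) = (\<lambda>(x, X). X(k := x))"
    by (auto simp: fun_eq_iff)
  ultimately show ?thesis by metis
qed

lemma meas_pair_k: "(\<lambda>\<omega>. (\<omega> k, \<omega>)) \<in> measurable (PiM UNIV (\<lambda>_::nat. D)) (D \<Otimes>\<^sub>M PiM UNIV (\<lambda>_. D))"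
  by measurable

lemma indep_nn:
  fixes \<Phi> :: "(nat \<Rightarrow> 'w) \<Rightarrow> 'w \<Rightarrow> ennreal"
  assumes D: "prob_space D"
    and meas: "(\<lambda>(x, X). \<Phi> X x) \<in> borel_measurable (D \<Otimes>\<^sub>M PiM UNIV (\<lambda>_::nat. D))"
    and inv: "\<And>X y x. \<Phi> (X(k := y)) x = \<Phi> X x"
  shows "(\<integral>\<^sup>+\<omega>. \<Phi> \<omega> (\<omega> k) \<partial>PiM UNIV (\<lambda>_. D)) = (\<integral>\<^sup>+X. (\<integral>\<^sup>+x. \<Phi> X x \<partial>D) \<partial>PiM UNIV (\<lambda>_. D))"
proof -
  let ?\<mu> = "PiM UNIV (\<lambda>_::nat. D)"
  interpret Dp: prob_space D by fact
  interpret Mp: prob_space ?\<mu> by (rule prob_space_PiM) (use D in auto)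
  interpret pair_sigma_finite D ?\<mu> ..
  have m1: "(\<lambda>\<omega>. \<Phi> \<omega> (\<omega> k)) \<in> borel_measurable ?\<mu>"
    using measurable_compose[OF meas_pair_k meas] by simp
  have "(\<integral>\<^sup>+\<omega>. \<Phi> \<omega> (\<omega> k) \<partial>?\<mu>) = (\<integral>\<^sup>+\<omega>. \<Phi> \<omega> (\<omega> k) \<partial>distr (D \<Otimes>\<^sub>M ?\<mu>) ?\<mu> (\<lambda>(x, X). X(k := x)))"
    by (simp only: distr_upd[OF D])
  also have "\<dots> = (\<integral>\<^sup>+p. \<Phi> ((\<lambda>(x, X). X(k := x)) p) ((\<lambda>(x, X). X(k := x)) p k) \<partial>(D \<Otimes>\<^sub>M ?\<mu>))"
    by (rule nn_integral_distr[OF meas_upd]) (use m1 distr_upd[OF D] in simp)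
  also have "\<dots> = (\<integral>\<^sup>+p. (\<lambda>(x, X). \<Phi> X x) p \<partial>(D \<Otimes>\<^sub>M ?\<mu>))"
    by (rule nn_integral_cong) (auto simp: inv split: prod.splits)
  also have "\<dots> = (\<integral>\<^sup>+X. (\<integral>\<^sup>+x. \<Phi> X x \<partial>D) \<partial>?\<mu>)"
    using nn_integral_snd[OF meas] by simp
  finally show ?thesis .
qed

lemma indep_int:
  fixes \<Phi> :: "(nat \<Rightarrow> 'w) \<Rightarrow> 'w \<Rightarrow> real"
  assumes D: "prob_space D"
    and int: "integrable (D \<Otimes>\<^sub>M PiM UNIV (\<lambda>_::nat. D)) (\<lambda>(x, X). \<Phi> X x)"
    and inv: "\<And>X y x. \<Phi> (X(k := y)) x = \<Phi> X x"
  shows "(\<integral>\<omega>. \<Phi> \<omega> (\<omega> k) \<partial>PiM UNIV (\<lambda>_. D)) = (\<integral>X. (\<integral>x. \<Phi> X x \<partial>D) \<partial>PiM UNIV (\<lambda>_. D))"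
proof -
  let ?\<mu> = "PiM UNIV (\<lambda>_::nat. D)"
  interpret Dp: prob_space D by fact
  interpret Mp: prob_space ?\<mu> by (rule prob_space_PiM) (use D in auto)
  interpret pair_sigma_finite D ?\<mu> ..
  have meas: "(\<lambda>(x, X). \<Phi> X x) \<in> borel_measurable (D \<Otimes>\<^sub>M ?\<mu>)" using int by auto
  have m1: "(\<lambda>\<omega>. \<Phi> \<omega> (\<omega> k)) \<in> borel_measurable ?\<mu>"
    using measurable_compose[OF meas_pair_k meas] by simp
  have "(\<integral>\<omega>. \<Phi> \<omega> (\<omega> k) \<partial>?\<mu>) = (\<integral>\<omega>. \<Phi> \<omega> (\<omega> k) \<partial>distr (D \<Otimes>\<^sub>M ?\<mu>) ?\<mu> (\<lambda>(x, X). X(k := x)))"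
    by (simp only: distr_upd[OF D])
  also have "\<dots> = (\<integral>p. \<Phi> ((\<lambda>(x, X). X(k := x)) p) ((\<lambda>(x, X). X(k := x)) p k) \<partial>(D \<Otimes>\<^sub>M ?\<mu>))"
    by (rule integral_distr[OF meas_upd]) (use m1 distr_upd[OF D] in simp)
  also have "\<dots> = (\<integral>p. (\<lambda>(x, X). \<Phi> X x) p \<partial>(D \<Otimes>\<^sub>M ?\<mu>))"
    by (rule Bochner_Integration.integral_cong) (auto simp: inv split: prod.splits)
  also have "\<dots> = (\<integral>X. (\<integral>x. \<Phi> X x \<partial>D) \<partial>?\<mu>)"
    using integral_snd[of "\<lambda>x X. \<Phi> X x", OF int] by simp
  finally show ?thesis .
qed


lemma meas_outer[measurable (raw)]:
  "f \<in> borel_measurable M \<Longrightarrow> g \<in> borel_measurable M \<Longrightarrow> (\<lambda>x. outer (f x) (g x)) \<in> borel_measurable M"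
  by (rule borel_measurable_continuous_Pair)
     (auto intro!: bounded_bilinear.continuous_on[OF bb_outer] continuous_on_fst continuous_on_snd continuous_on_id)

lemma meas_mmul[measurable (raw)]:
  fixes f g :: "'a \<Rightarrow> real^'n^'n"
  shows "f \<in> borel_measurable M \<Longrightarrow> g \<in> borel_measurable M \<Longrightarrow> (\<lambda>x. f x ** g x) \<in> borel_measurable M"
  by (rule borel_measurable_continuous_Pair)
     (auto intro!: bounded_bilinear.continuous_on[OF bb_mm] continuous_on_fst continuous_on_snd continuous_on_id)

lemma meas_householder[measurable (raw)]:
  assumes [measurable]: "f \<in> borel_measurable M"
  shows "(\<lambda>x. householder (f x)) \<in> borel_measurable M"
  unfolding householder_outer by measurable

lemma meas_dH[measurable (raw)]:
  assumes [measurable]: "f \<in> borel_measurable M" "g \<in> borel_measurable M"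
  shows "(\<lambda>x. dH (f x) (g x)) \<in> borel_measurable M"
  unfolding dH_def by measurable

lemma meas_hp:
  assumes "\<And>m. (\<lambda>x. W x m) \<in> borel_measurable M"
  shows "(\<lambda>x. hp xs (W x)) \<in> borel_measurable M"
  using assms by (induction xs) auto

lemma meas_dhp:
  assumes "\<And>m. (\<lambda>x. W x m) \<in> borel_measurable M" "\<And>m. (\<lambda>x. D x m) \<in> borel_measurable M"
  shows "(\<lambda>x. dhp xs (W x) (D x)) \<in> borel_measurable M"
proof (induction xs)
  case (Cons a xs)
  have [measurable]: "(\<lambda>x. W x a) \<in> borel_measurable M" "(\<lambda>x. D x a) \<in> borel_measurable M"
    "(\<lambda>x. hp xs (W x)) \<in> borel_measurable M" using assms by (auto intro: meas_hp)
  note Cons[measurable]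
  show ?case by simp measurable
qed simp

lemma meas_adjf:
  fixes A :: "'x \<Rightarrow> 'a::euclidean_space \<Rightarrow> 'b::{real_inner, second_countable_topology}"
  assumes "\<And>b. (\<lambda>x. A x b) \<in> borel_measurable M" "y \<in> borel_measurable M"
  shows "(\<lambda>x. adjf (A x) (y x)) \<in> borel_measurable M"
  unfolding adjf_def using assms by measurable

lemma meas_Dl:
  assumes "\<And>m. (\<lambda>x. W x m) \<in> borel_measurable M" "y \<in> borel_measurable M"
  shows "(\<lambda>x. adjf (Dl xs (W x) l) (y x)) \<in> borel_measurable M"
  by (rule meas_adjf) (auto simp: Dl_def intro!: meas_dhp assms)


primrec itx :: "('w \<Rightarrow> real^'n^'n \<Rightarrow> real) \<Rightarrow> nat \<Rightarrow> (nat \<Rightarrow> real^'n) \<Rightarrow> (nat \<Rightarrow> 'w) \<Rightarrow> nat \<Rightarrow> nat \<Rightarrow> real^'n" where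
  "itx ft L V0 \<omega> 0 = V0"
| "itx ft L V0 \<omega> (Suc k) = (\<lambda>l. itx ft L V0 \<omega> k l
     - (1 / sqrt (real (Suc k))) *\<^sub>R adjf (Dl [1..<Suc L] (itx ft L V0 \<omega> k) l) (grad (ft (\<omega> k)) (hprod L (itx ft L V0 \<omega> k))))"

lemma adjf_Dl_orth:
  assumes "\<And>m. m \<in> set xs \<Longrightarrow> W m \<noteq> 0"
  shows "W l \<bullet> adjf (Dl xs W l) y = 0"
  by (simp only: adjf_inner[OF Dl_linear[OF assms]] Dl_self inner_zero_left)

locale sgd_setting =
  fixes f :: "real^'n^'n \<Rightarrow> real"
    and ft :: "'w \<Rightarrow> real^'n^'n \<Rightarrow> real"
    and D :: "'w measure"
    and L :: nat and V0 :: "nat \<Rightarrow> real^'n" and M1 M2 :: real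
  assumes f_diff: "\<forall>X. f differentiable (at X)"
    and M1_pos: "M1 > 0"
    and f_lip: "\<forall>X1 X2. orthogonal_matrix X1 \<longrightarrow> orthogonal_matrix X2 \<longrightarrow>
                 norm (grad f X1 - grad f X2) \<le> M1 * norm (X1 - X2)"
    and D_prob: "prob_space D"
    and ft_diff: "\<forall>\<omega>\<in>space D. \<forall>X. ft \<omega> differentiable (at X)"
    and ft_meas: "(\<lambda>(\<omega>, X). grad (ft \<omega>) X) \<in> borel_measurable (D \<Otimes>\<^sub>M borel)"
    and unbiased: "\<forall>X. orthogonal_matrix X \<longrightarrow> (\<integral>\<omega>. grad (ft \<omega>) X \<partial>D) = grad f X"
    and M2_pos: "M2 > 0"
    and second_moment: "\<forall>X. orthogonal_matrix X \<longrightarrow>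
                 (\<integral>\<^sup>+\<omega>. ennreal ((norm (grad (ft \<omega>) X))^2) \<partial>D) \<le> ennreal M2"
    and V0_nz: "\<forall>l\<in>{1..L}. V0 l \<noteq> 0"
    and L1: "L \<ge> 1"
begin

abbreviation "\<mu> \<equiv> PiM UNIV (\<lambda>_::nat. D)"
abbreviation "xs \<equiv> [1..<Suc L]"
abbreviation "itr \<equiv> itx ft L V0"

definition c0 :: real where "c0 = Min ((\<lambda>l. norm (V0 l)) ` {1..L})"

lemma c0_pos: "c0 > 0"
  unfolding c0_def using V0_nz L1 by (subst Min_gr_iff) auto

lemma c0_le: "l \<in> {1..L} \<Longrightarrow> c0 \<le> norm (V0 l)"
  unfolding c0_def by (rule Min_le) auto

lemma it_norm: "m \<in> {1..L} \<Longrightarrow> norm (V0 m) \<le> norm (itr \<omega> k m)"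
proof (induction k arbitrary: m)
  case 0 thus ?case by simp
next
  case (Suc k)
  have nz: "\<And>m. m \<in> set xs \<Longrightarrow> itr \<omega> k m \<noteq> 0"
  proof -
    fix m assume "m \<in> set xs"
    hence m: "m \<in> {1..L}" by (metis set_upt_1L)
    have "0 < norm (V0 m)" using V0_nz m by auto
    also have "\<dots> \<le> norm (itr \<omega> k m)" by (rule Suc.IH[OF m])
    finally show "itr \<omega> k m \<noteq> 0" by auto
  qed
  have "norm (itr \<omega> k m) \<le> norm (itr \<omega> k m + (- (1 / sqrt (real (Suc k)))) *\<^sub>R
      adjf (Dl xs (itr \<omega> k) m) (grad (ft (\<omega> k)) (hprod L (itr \<omega> k))))"
  proof (rule orth_norm_ge)
    have o: "itr \<omega> k m \<bullet> adjf (Dl xs (itr \<omega> k) m) y = 0" for y by (rule adjf_Dl_orth) (rule nz)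
    show "itr \<omega> k m \<bullet> (- (1 / sqrt (real (Suc k)))) *\<^sub>R
      adjf (Dl xs (itr \<omega> k) m) (grad (ft (\<omega> k)) (hprod L (itr \<omega> k))) = 0"
      by (simp only: inner_scaleR_right o mult_zero_right)
  qed
  thus ?case using Suc.IH[OF Suc.prems] by simp
qed

lemma it_nz: "m \<in> {1..L} \<Longrightarrow> itr \<omega> k m \<noteq> 0"
  using it_norm[of m \<omega> k] V0_nz by auto

lemma it_c0: "m \<in> {1..L} \<Longrightarrow> c0 \<le> norm (itr \<omega> k m)"
  using it_norm[of m \<omega> k] c0_le[of m] by linarith

lemma it_nz': "m \<in> set xs \<Longrightarrow> itr \<omega> k m \<noteq> 0"
  using it_nz by (metis set_upt_1L)

lemma it_orth: "orthogonal_matrix (hprod L (itr \<omega> k))"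
  using hprod_orth it_nz by blast

lemma space_mu: "\<omega> \<in> space \<mu> \<Longrightarrow> \<omega> k \<in> space D"
  by (auto simp: space_PiM)

lemma sgd_eq: "\<omega> \<in> space \<mu> \<Longrightarrow> sgd_iter ft L V0 \<omega> k = itr \<omega> k"
proof (induction k)
  case 0 thus ?case by simp
next
  case (Suc k)
  have d: "ft (\<omega> k) differentiable (at (hprod L (itr \<omega> k)))"
    using ft_diff space_mu[OF Suc.prems] by blast
  have nz: "\<forall>m\<in>{1..L}. itr \<omega> k m \<noteq> 0" using it_nz by blast
  show ?case using Suc by (simp add: pgrad_char[OF nz d] del: upt_Suc)
qed

lemma it_inv: "j \<ge> k \<Longrightarrow> itr (w(j := y)) k = itr w k"
  by (induction k) auto

lemma it_meas: "(\<lambda>\<omega>. itr \<omega> k l) \<in> borel_measurable \<mu>"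
proof (induction k arbitrary: l)
  case 0 thus ?case by simp
next
  case (Suc k)
  have X: "(\<lambda>\<omega>. hprod L (itr \<omega> k)) \<in> borel_measurable \<mu>"
    unfolding hprod_hp by (rule meas_hp) (rule Suc.IH)
  have G: "(\<lambda>\<omega>. grad (ft (\<omega> k)) (hprod L (itr \<omega> k))) \<in> borel_measurable \<mu>"
  proof -
    have "(\<lambda>\<omega>. (\<omega> k, hprod L (itr \<omega> k))) \<in> measurable \<mu> (D \<Otimes>\<^sub>M borel)"
      using X by measurable
    from measurable_compose[OF this ft_meas] show ?thesis by simp
  qed
  have "(\<lambda>\<omega>. adjf (Dl xs (itr \<omega> k) l) (grad (ft (\<omega> k)) (hprod L (itr \<omega> k)))) \<in> borel_measurable \<mu>"
    by (rule meas_Dl[OF Suc.IH G])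
  thus ?case using Suc.IH by simp
qed

end


lemma linear_transpose': "linear (transpose :: real^'n^'m \<Rightarrow> real^'m^'n)"
  by (rule linearI) (simp_all add: transpose_def vec_eq_iff)

lemma compact_orth: "compact {X :: real^'n^'n. orthogonal_matrix X}"
proof -
  have cl: "closed {X :: real^'n^'n. transpose X ** X = mat 1}"
  proof (rule closed_Collect_eq)
    have "continuous_on UNIV (transpose :: real^'n^'n \<Rightarrow> real^'n^'n)"
      by (rule linear_continuous_on) (rule linear_conv_bounded_linear[THEN iffD1, OF linear_transpose'])
    thus "continuous_on UNIV (\<lambda>X :: real^'n^'n. transpose X ** X)"
      by (intro bounded_bilinear.continuous_on[OF bb_mm] continuous_on_id)
  qed simp
  have bd: "bounded {X :: real^'n^'n. orthogonal_matrix X}"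
  proof -
    have "norm X \<le> sqrt (real CARD('n))" if "orthogonal_matrix X" for X :: "real^'n^'n"
    proof -
      have "norm (X $ i) = 1" for i
        using that[unfolded orthogonal_matrix_orthonormal_rows] by (simp add: row_def)
      hence "norm X = L2_set (\<lambda>i. 1) (UNIV :: 'n set)" by (simp add: norm_vec_def)
      thus ?thesis by (simp add: L2_set_constant)
    qed
    thus ?thesis by (auto simp: bounded_iff)
  qed
  show ?thesis using cl bd by (simp add: compact_eq_bounded_closed orthogonal_matrix)
qed

context sgd_setting
begin

lemma f_cont: "continuous_on UNIV f"
  using f_diff differentiable_imp_continuous_within continuous_at_imp_continuous_on by blast

lemma f_bounded: "\<exists>Bf. \<forall>X. orthogonal_matrix X \<longrightarrow> \<bar>f X\<bar> \<le> Bf"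
proof -
  have "compact (f ` {X. orthogonal_matrix X})"
    by (rule compact_continuous_image[OF continuous_on_subset[OF f_cont] compact_orth]) auto
  hence "bounded (f ` {X. orthogonal_matrix X})" by (rule compact_imp_bounded)
  thus ?thesis by (auto simp: bounded_iff)
qed

lemma gradf_bounded: "\<exists>B\<ge>0. \<forall>X. orthogonal_matrix X \<longrightarrow> norm (grad f X) \<le> B"
proof -
  let ?B = "norm (grad f (mat 1)) + M1 * (sqrt (real CARD('n)) + norm (mat 1 :: real^'n^'n))"
  have "norm (grad f X) \<le> ?B" if o: "orthogonal_matrix X" for X
  proof -
    have nX: "norm X \<le> sqrt (real CARD('n))"
    proof -
      have "norm (X $ i) = 1" for i
        using o[unfolded orthogonal_matrix_orthonormal_rows] by (simp add: row_def)
      hence "norm X = L2_set (\<lambda>i. 1) (UNIV :: 'n set)" by (simp add: norm_vec_def)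
      thus ?thesis by (simp add: L2_set_constant)
    qed
    have "norm (grad f X) \<le> norm (grad f (mat 1)) + norm (grad f X - grad f (mat 1))"
      by (metis norm_triangle_sub add.commute)
    also have "norm (grad f X - grad f (mat 1)) \<le> M1 * norm (X - mat 1)"
      using f_lip o orthogonal_matrix_id by blast
    also have "norm (X - mat 1) \<le> sqrt (real CARD('n)) + norm (mat 1 :: real^'n^'n)"
      using norm_triangle_ineq4[of X "mat 1"] nX by linarith
    finally show ?thesis using M1_pos by (simp add: mult_left_mono)
  qed
  moreover have "?B \<ge> 0" using M1_pos by simp
  ultimately show ?thesis by blast
qed

definition Xk where "Xk k \<omega> = hprod L (itr \<omega> k)"
definition gk where "gk k \<omega> = grad (ft (\<omega> k)) (Xk k \<omega>)"
definition Pf where "Pf k \<omega> l = adjf (Dl xs (itr \<omega> k) l) (grad f (Xk k \<omega>))"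
definition Gk where "Gk k \<omega> l = adjf (Dl xs (itr \<omega> k) l) (gk k \<omega>)"
definition st :: "nat \<Rightarrow> real" where "st k = 1 / sqrt (real (Suc k))"

lemma itr_Suc: "itr \<omega> (Suc k) = (\<lambda>l. itr \<omega> k l - st k *\<^sub>R Gk k \<omega> l)"
  by (simp add: Gk_def gk_def Xk_def st_def del: upt_Suc)

lemma Kp_ex: "\<exists>Kp\<ge>0. \<forall>\<omega> k l y. norm (adjf (Dl xs (itr \<omega> k) l) y) \<le> Kp * norm y"
proof -
  obtain K where K: "K \<ge> 0" "\<forall>(W::nat \<Rightarrow> real^'n) c l d. c > 0 \<longrightarrow> (\<forall>m\<in>set xs. c \<le> norm (W m)) \<longrightarrow>
     norm (Dl xs W l d) \<le> K * (norm d / c)" using Dl_bound[of xs] by blast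
  show ?thesis
  proof (intro exI[of _ "K / c0"] conjI allI)
    show "0 \<le> K / c0" using K c0_pos by simp
    fix \<omega> k l y
    have lin: "linear (Dl xs (itr \<omega> k) l)" by (rule Dl_linear) (rule it_nz')
    show "norm (adjf (Dl xs (itr \<omega> k) l) y) \<le> K / c0 * norm y"
    proof (rule adjf_norm[OF lin])
      fix x
      have "\<forall>m\<in>set xs. c0 \<le> norm (itr \<omega> k m)" using it_c0 by (metis set_upt_1L)
      thus "norm (Dl xs (itr \<omega> k) l x) \<le> K / c0 * norm x" using K(2) c0_pos by auto
    qed
  qed
qed

end


context sgd_setting
begin

lemma step_ineq: "\<exists>C2\<ge>0. \<forall>\<omega> k. f (Xk (Suc k) \<omega>) \<le> f (Xk k \<omega>) - st k * (\<Sum>l=1..L. Pf k \<omega> l \<bullet> Gk k \<omega> l)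
   + C2 * (st k)^2 * (norm (gk k \<omega>))^2"
proof -
  obtain C where C: "C \<ge> 0" "\<forall>(V::nat\<Rightarrow>real^'n) D S c. c > 0 \<longrightarrow> S \<ge> 0 \<longrightarrow>
     (\<forall>m\<in>{1..L}. c \<le> norm (V m) \<and> norm (D m) \<le> S \<and> V m \<bullet> D m = 0) \<longrightarrow>
     f (hprod L (\<lambda>m. V m + D m)) \<le> f (hprod L V) + (\<Sum>l=1..L. pgrad f L V l \<bullet> D l) + C * (S / c)^2"
    using descent[OF f_diff _ f_lip, of L] M1_pos by auto
  obtain Kp where Kp: "Kp \<ge> 0" "\<And>\<omega> k l y. norm (adjf (Dl xs (itr \<omega> k) l) y) \<le> Kp * norm y"
    using Kp_ex by blast
  show ?thesis
  proof (intro exI[of _ "C * (Kp / c0)^2"] conjI allI)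
    show "0 \<le> C * (Kp / c0)^2" using C by simp
    fix \<omega> k
    let ?V = "itr \<omega> k" and ?s = "st k" and ?g = "norm (gk k \<omega>)"
    define Dd where "Dd m = (- ?s) *\<^sub>R Gk k \<omega> m" for m
    define S where "S = ?s * Kp * ?g"
    have s0: "?s \<ge> 0" by (simp add: st_def)
    have S0: "S \<ge> 0" using s0 Kp by (simp add: S_def)
    have cond: "\<forall>m\<in>{1..L}. c0 \<le> norm (?V m) \<and> norm (Dd m) \<le> S \<and> ?V m \<bullet> Dd m = 0"
    proof (intro ballI conjI)
      fix m assume m: "m \<in> {1..L}"
      show "c0 \<le> norm (?V m)" by (rule it_c0[OF m])
      have "norm (Dd m) = ?s * norm (Gk k \<omega> m)" using s0 by (simp add: Dd_def)
      also have "\<dots> \<le> ?s * (Kp * ?g)" unfolding Gk_def using Kp(2) s0 by (intro mult_left_mono) auto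
      finally show "norm (Dd m) \<le> S" by (simp add: S_def mult_ac)
      have o: "?V m \<bullet> adjf (Dl xs ?V m) y = 0" for y by (rule adjf_Dl_orth) (rule it_nz')
      show "?V m \<bullet> Dd m = 0" by (simp only: Dd_def Gk_def inner_scaleR_right o mult_zero_right)
    qed
    have d: "f (hprod L (\<lambda>m. ?V m + Dd m)) \<le> f (hprod L ?V) + (\<Sum>l=1..L. pgrad f L ?V l \<bullet> Dd l) + C * (S / c0)^2"
      using C(2) c0_pos S0 cond by blast
    have e1: "hprod L (\<lambda>m. ?V m + Dd m) = Xk (Suc k) \<omega>"
      by (simp add: Xk_def itr_Suc Dd_def del: itx.simps)
    have nz: "\<forall>m\<in>{1..L}. ?V m \<noteq> 0" using it_nz by blast
    have e2: "pgrad f L ?V l = Pf k \<omega> l" for l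
      using pgrad_char[OF nz] f_diff by (simp add: Pf_def Xk_def del: upt_Suc)
    have e3: "(\<Sum>l=1..L. pgrad f L ?V l \<bullet> Dd l) = - ?s * (\<Sum>l=1..L. Pf k \<omega> l \<bullet> Gk k \<omega> l)"
      by (simp add: e2 Dd_def sum_distrib_left)
    have e4: "C * (S / c0)^2 = C * (Kp / c0)^2 * ?s^2 * ?g^2"
      by (simp add: S_def power_mult_distrib power_divide)
    show "f (Xk (Suc k) \<omega>) \<le> f (Xk k \<omega>) - ?s * (\<Sum>l=1..L. Pf k \<omega> l \<bullet> Gk k \<omega> l) + C * (Kp / c0)^2 * ?s^2 * ?g^2"
      using d unfolding e1 e3 e4 by (simp add: Xk_def)
  qed
qed

end


context sgd_setting
begin

interpretation Dp: prob_space D by (rule D_prob)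
interpretation Mp: prob_space \<mu> by (rule prob_space_PiM) (use D_prob in auto)

lemma Xk_meas[measurable]: "(\<lambda>\<omega>. Xk k \<omega>) \<in> borel_measurable \<mu>"
  unfolding Xk_def hprod_hp by (rule meas_hp) (rule it_meas)

lemma Xk_orth: "orthogonal_matrix (Xk k \<omega>)"
  unfolding Xk_def by (rule it_orth)

lemma Xk_inv: "Xk k (w(k := y)) = Xk k w"
  by (simp add: Xk_def it_inv)

lemma ftm_pair: "(\<lambda>(x, X). grad (ft x) (Xk k X)) \<in> borel_measurable (D \<Otimes>\<^sub>M \<mu>)"
proof -
  have "(\<lambda>p. (fst p, Xk k (snd p))) \<in> measurable (D \<Otimes>\<^sub>M \<mu>) (D \<Otimes>\<^sub>M borel)"
    by measurable
  from measurable_compose[OF this ft_meas] show ?thesis by (simp add: case_prod_beta)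
qed

lemma gk_meas[measurable]: "(\<lambda>\<omega>. gk k \<omega>) \<in> borel_measurable \<mu>"
proof -
  have "(\<lambda>\<omega>. (\<omega> k, Xk k \<omega>)) \<in> measurable \<mu> (D \<Otimes>\<^sub>M borel)" by measurable
  from measurable_compose[OF this ft_meas] show ?thesis by (simp add: gk_def)
qed

lemma gradf_cont: "continuous_on {X. orthogonal_matrix X} (grad f)"
proof (rule lipschitz_on_continuous_on)
  show "M1-lipschitz_on {X. orthogonal_matrix X} (grad f)"
    using f_lip M1_pos by (intro lipschitz_onI) (auto simp: dist_norm)
qed

lemma gradf_Xk_meas[measurable]: "(\<lambda>\<omega>. grad f (Xk k \<omega>)) \<in> borel_measurable \<mu>"
proof -
  have "(\<lambda>\<omega>. Xk k \<omega>) \<in> measurable \<mu> (restrict_space borel {X. orthogonal_matrix X})"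
    by (rule measurable_restrict_space2) (auto simp: Xk_orth)
  from measurable_compose[OF this borel_measurable_continuous_on_restrict[OF gradf_cont]] show ?thesis .
qed

lemma Pf_meas[measurable]: "(\<lambda>\<omega>. Pf k \<omega> l) \<in> borel_measurable \<mu>"
  unfolding Pf_def by (rule meas_Dl[OF it_meas gradf_Xk_meas])

lemma Gk_meas[measurable]: "(\<lambda>\<omega>. Gk k \<omega> l) \<in> borel_measurable \<mu>"
  unfolding Gk_def by (rule meas_Dl[OF it_meas gk_meas])

lemma F_meas[measurable]: "(\<lambda>\<omega>. f (Xk k \<omega>)) \<in> borel_measurable \<mu>"
  by (rule measurable_compose[OF Xk_meas borel_measurable_continuous_onI[OF f_cont]])

lemma F_int: "integrable \<mu> (\<lambda>\<omega>. f (Xk k \<omega>))"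
proof -
  obtain Bf where Bf: "\<forall>X. orthogonal_matrix X \<longrightarrow> \<bar>f X\<bar> \<le> Bf" using f_bounded by blast
  show ?thesis
    by (rule Mp.integrable_const_bound[where B = Bf]) (auto simp: Xk_orth Bf)
qed

lemma ft_sec_meas[measurable]: "(\<lambda>x. grad (ft x) Y) \<in> borel_measurable D"
proof -
  have "(\<lambda>x. (x, Y)) \<in> measurable D (D \<Otimes>\<^sub>M borel)" by measurable
  from measurable_compose[OF this ft_meas] show ?thesis by simp
qed

lemma ennreal_norm_le: "ennreal (norm (v::'a::real_normed_vector)) \<le> 1 + ennreal ((norm v)^2)"
proof -
  have "0 \<le> (norm v - 1)^2" by simp
  hence "2 * norm v \<le> (norm v)^2 + 1" by (simp add: power2_diff)
  hence "norm v \<le> 1 + (norm v)^2" using norm_ge_zero[of v] by linarith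
  hence "ennreal (norm v) \<le> ennreal (1 + (norm v)^2)" by (rule ennreal_leI)
  also have "ennreal (1 + (norm v)^2) = 1 + ennreal ((norm v)^2)" by (subst ennreal_plus) auto
  finally show ?thesis .
qed

lemma ft_nn_norm: "orthogonal_matrix Y \<Longrightarrow> (\<integral>\<^sup>+x. ennreal (norm (grad (ft x) Y)) \<partial>D) \<le> 1 + ennreal M2"
proof -
  assume Y: "orthogonal_matrix Y"
  have "(\<integral>\<^sup>+x. ennreal (norm (grad (ft x) Y)) \<partial>D) \<le> (\<integral>\<^sup>+x. 1 + ennreal ((norm (grad (ft x) Y))^2) \<partial>D)"
    by (rule nn_integral_mono) (rule ennreal_norm_le)
  also have "\<dots> = 1 + (\<integral>\<^sup>+x. ennreal ((norm (grad (ft x) Y))^2) \<partial>D)"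
    by (subst nn_integral_add) (auto simp: Dp.emeasure_space_1)
  also have "\<dots> \<le> 1 + ennreal M2" using second_moment Y by (auto intro: add_left_mono)
  finally show ?thesis .
qed

lemma one_M2_fin: "1 + ennreal M2 < \<top>"
  by (simp add: ennreal_plus[symmetric] del: ennreal_plus)

lemma ft_int: "orthogonal_matrix Y \<Longrightarrow> integrable D (\<lambda>x. grad (ft x) Y)"
  by (rule integrableI_bounded) (use order.strict_trans1[OF ft_nn_norm one_M2_fin] in auto)

  
lemma gk_pair_nn_meas: "(\<lambda>(x, X). ennreal ((norm (grad (ft x) (Xk k X)))^2)) \<in> borel_measurable (D \<Otimes>\<^sub>M \<mu>)"
proof -
  have "(\<lambda>v::real^'n^'n. ennreal ((norm v)^2)) \<in> borel_measurable borel" by measurable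
  from measurable_compose[OF ftm_pair this] show ?thesis by (simp add: case_prod_beta)
qed

lemma gk_pair_norm_meas: "(\<lambda>(x, X). norm (grad (ft x) (Xk k X))) \<in> borel_measurable (D \<Otimes>\<^sub>M \<mu>)"
proof -
  have "(\<lambda>v::real^'n^'n. norm v) \<in> borel_measurable borel" by measurable
  from measurable_compose[OF ftm_pair this] show ?thesis by (simp add: case_prod_beta)
qed

lemma gk_nn: "(\<integral>\<^sup>+\<omega>. ennreal ((norm (gk k \<omega>))^2) \<partial>\<mu>) \<le> ennreal M2"
proof -
  have "(\<integral>\<^sup>+\<omega>. ennreal ((norm (gk k \<omega>))^2) \<partial>\<mu>)
     = (\<integral>\<^sup>+X. (\<integral>\<^sup>+x. ennreal ((norm (grad (ft x) (Xk k X)))^2) \<partial>D) \<partial>\<mu>)"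
    unfolding gk_def
    by (rule indep_nn[where \<Phi> = "\<lambda>X x. ennreal ((norm (grad (ft x) (Xk k X)))^2)", OF D_prob gk_pair_nn_meas])
       (simp add: Xk_inv)
  also have "\<dots> \<le> (\<integral>\<^sup>+X. ennreal M2 \<partial>\<mu>)"
    by (rule nn_integral_mono) (use second_moment Xk_orth in auto)
  also have "\<dots> = ennreal M2" by (simp add: Mp.emeasure_space_1)
  finally show ?thesis .
qed

lemma gk2_int: "integrable \<mu> (\<lambda>\<omega>. (norm (gk k \<omega>))^2)"
proof -
  have fin: "(\<integral>\<^sup>+\<omega>. ennreal ((norm (gk k \<omega>))^2) \<partial>\<mu>) < \<top>"
    using gk_nn[of k] by (rule order.strict_trans1) simp
  show ?thesis by (rule integrableI_bounded) (use fin in auto)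
qed

lemma gk2_le: "(\<integral>\<omega>. (norm (gk k \<omega>))^2 \<partial>\<mu>) \<le> M2"
proof -
  have "ennreal (\<integral>\<omega>. (norm (gk k \<omega>))^2 \<partial>\<mu>) = (\<integral>\<^sup>+\<omega>. ennreal ((norm (gk k \<omega>))^2) \<partial>\<mu>)"
    by (rule nn_integral_eq_integral[symmetric]) (auto intro: gk2_int)
  also have "\<dots> \<le> ennreal M2" by (rule gk_nn)
  finally show ?thesis using M2_pos by (simp add: ennreal_le_iff)
qed

end


context sgd_setting
begin

interpretation Dp: prob_space D by (rule D_prob)
interpretation Mp: prob_space \<mu> by (rule prob_space_PiM) (use D_prob in auto)
interpretation PS: pair_sigma_finite D \<mu> ..

lemma itr_snd_meas: "(\<lambda>p. itr (snd p) k m) \<in> borel_measurable (D \<Otimes>\<^sub>M \<mu>)"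
  by (rule measurable_compose[OF measurable_snd it_meas])

lemma Phi_meas: "(\<lambda>p. Pf k (snd p) l \<bullet> adjf (Dl xs (itr (snd p) k) l) (grad (ft (fst p)) (Xk k (snd p))))
    \<in> borel_measurable (D \<Otimes>\<^sub>M \<mu>)"
proof -
  have a: "(\<lambda>p. Pf k (snd p) l) \<in> borel_measurable (D \<Otimes>\<^sub>M \<mu>)"
    by (rule measurable_compose[OF measurable_snd Pf_meas])
  have g: "(\<lambda>p. grad (ft (fst p)) (Xk k (snd p))) \<in> borel_measurable (D \<Otimes>\<^sub>M \<mu>)"
    using ftm_pair[of k] by (simp add: case_prod_beta)
  have b: "(\<lambda>p. adjf (Dl xs (itr (snd p) k) l) (grad (ft (fst p)) (Xk k (snd p)))) \<in> borel_measurable (D \<Otimes>\<^sub>M \<mu>)"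
    by (rule meas_Dl[OF itr_snd_meas g])
  show ?thesis using a b by measurable
qed

lemma norm_pair_int: "integrable (D \<Otimes>\<^sub>M \<mu>) (\<lambda>p. norm (grad (ft (fst p)) (Xk k (snd p))))"
proof (rule integrableI_bounded)
  show "(\<lambda>p. norm (grad (ft (fst p)) (Xk k (snd p)))) \<in> borel_measurable (D \<Otimes>\<^sub>M \<mu>)"
    using gk_pair_norm_meas[of k] by (simp add: case_prod_beta)
  have "(\<integral>\<^sup>+p. ennreal (norm (norm (grad (ft (fst p)) (Xk k (snd p))))) \<partial>(D \<Otimes>\<^sub>M \<mu>))
      = (\<integral>\<^sup>+p. (\<lambda>(x, X). ennreal (norm (grad (ft x) (Xk k X)))) p \<partial>(D \<Otimes>\<^sub>M \<mu>))"
    by (simp add: case_prod_beta)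
  also have "\<dots> = (\<integral>\<^sup>+X. (\<integral>\<^sup>+x. ennreal (norm (grad (ft x) (Xk k X))) \<partial>D) \<partial>\<mu>)"
  proof -
    have m: "(\<lambda>(x, X). ennreal (norm (grad (ft x) (Xk k X)))) \<in> borel_measurable (D \<Otimes>\<^sub>M \<mu>)"
      using gk_pair_norm_meas[of k] by (simp add: case_prod_beta)
    show ?thesis using PS.nn_integral_snd[OF m] by simp
  qed
  also have "\<dots> \<le> (\<integral>\<^sup>+X. 1 + ennreal M2 \<partial>\<mu>)"
    by (rule nn_integral_mono) (rule ft_nn_norm[OF Xk_orth])
  also have "\<dots> = 1 + ennreal M2" by (simp add: Mp.emeasure_space_1)
  also have "\<dots> < \<top>" by (rule one_M2_fin)
  finally have "(\<integral>\<^sup>+p. ennreal (norm (norm (grad (ft (fst p)) (Xk k (snd p))))) \<partial>(D \<Otimes>\<^sub>M \<mu>)) < \<top>" .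
  thus "(\<integral>\<^sup>+p. ennreal (norm (norm (grad (ft (fst p)) (Xk k (snd p))))) \<partial>(D \<Otimes>\<^sub>M \<mu>)) < \<infinity>" by simp
qed

lemma consts_ex: "\<exists>Kp\<ge>0. \<exists>B\<ge>0. (\<forall>\<omega> k l y. norm (adjf (Dl xs (itr \<omega> k) l) y) \<le> Kp * norm y)
   \<and> (\<forall>\<omega> k l. norm (Pf k \<omega> l) \<le> Kp * B)"
proof -
  obtain Kp where Kp: "Kp \<ge> 0" "\<And>\<omega> k l y. norm (adjf (Dl xs (itr \<omega> k) l) y) \<le> Kp * norm y"
    using Kp_ex by blast
  obtain B where B: "B \<ge> 0" "\<forall>X. orthogonal_matrix X \<longrightarrow> norm (grad f X) \<le> B" using gradf_bounded by blast
  have "norm (Pf k \<omega> l) \<le> Kp * B" for k \<omega> l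
    unfolding Pf_def using Kp(2) B(2) Xk_orth Kp(1) by (meson mult_left_mono order_trans)
  thus ?thesis using Kp B by blast
qed

lemma PG:
  shows "integrable \<mu> (\<lambda>\<omega>. Pf k \<omega> l \<bullet> Gk k \<omega> l)"
    and "(\<integral>\<omega>. Pf k \<omega> l \<bullet> Gk k \<omega> l \<partial>\<mu>) = (\<integral>\<omega>. (norm (Pf k \<omega> l))^2 \<partial>\<mu>)"
proof -
  obtain Kp B where KB: "Kp \<ge> 0" "B \<ge> 0" "\<And>\<omega> k l y. norm (adjf (Dl xs (itr \<omega> k) l) y) \<le> Kp * norm y"
     "\<And>\<omega> k l. norm (Pf k \<omega> l) \<le> Kp * B" using consts_ex by blast
  have bnd: "norm (Pf k X l \<bullet> adjf (Dl xs (itr X k) l) y) \<le> (Kp * B * Kp) * norm y" for X y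
  proof -
    have "norm (Pf k X l \<bullet> adjf (Dl xs (itr X k) l) y) \<le> norm (Pf k X l) * norm (adjf (Dl xs (itr X k) l) y)"
      by (simp only: real_norm_def) (rule Cauchy_Schwarz_ineq2)
    also have "\<dots> \<le> (Kp * B) * (Kp * norm y)" using KB by (intro mult_mono) auto
    finally show ?thesis by (simp add: mult_ac)
  qed
  define \<Phi> where "\<Phi> X x = Pf k X l \<bullet> adjf (Dl xs (itr X k) l) (grad (ft x) (Xk k X))" for X x
  have inv: "\<Phi> (X(k := y)) x = \<Phi> X x" for X y x
    by (simp add: \<Phi>_def Pf_def Xk_inv it_inv del: upt_Suc)
  have intP: "integrable (D \<Otimes>\<^sub>M \<mu>) (\<lambda>(x, X). \<Phi> X x)"
  proof (rule Bochner_Integration.integrable_bound)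
    show "integrable (D \<Otimes>\<^sub>M \<mu>) (\<lambda>p. (Kp * B * Kp) * norm (grad (ft (fst p)) (Xk k (snd p))))"
      using norm_pair_int[of k] by simp
    show "(\<lambda>(x, X). \<Phi> X x) \<in> borel_measurable (D \<Otimes>\<^sub>M \<mu>)"
      using Phi_meas[of k l] by (simp add: \<Phi>_def case_prod_beta)
    show "AE p in D \<Otimes>\<^sub>M \<mu>. norm ((\<lambda>(x, X). \<Phi> X x) p) \<le> norm ((Kp * B * Kp) * norm (grad (ft (fst p)) (Xk k (snd p))))"
      using bnd KB by (auto simp: \<Phi>_def case_prod_beta)
  qed
  have inner: "(\<integral>x. \<Phi> X x \<partial>D) = (norm (Pf k X l))^2" for X
  proof -
    have lin: "linear (Dl xs (itr X k) l)" by (rule Dl_linear) (rule it_nz')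
    let ?c = "Dl xs (itr X k) l (Pf k X l)"
    have "(\<integral>x. \<Phi> X x \<partial>D) = (\<integral>x. ?c \<bullet> grad (ft x) (Xk k X) \<partial>D)"
      by (simp only: \<Phi>_def adjf_inner[OF lin])
    also have "\<dots> = ?c \<bullet> (\<integral>x. grad (ft x) (Xk k X) \<partial>D)"
      by (rule integral_inner_right) (rule ft_int[OF Xk_orth])
    also have "\<dots> = ?c \<bullet> grad f (Xk k X)" using unbiased Xk_orth by simp
    also have "\<dots> = Pf k X l \<bullet> Pf k X l" by (simp only: Pf_def adjf_inner[OF lin])
    also have "\<dots> = (norm (Pf k X l))^2" by (simp add: power2_norm_eq_inner)
    finally show ?thesis .
  qed
  have "(\<integral>\<omega>. Pf k \<omega> l \<bullet> Gk k \<omega> l \<partial>\<mu>) = (\<integral>\<omega>. \<Phi> \<omega> (\<omega> k) \<partial>\<mu>)"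
    by (simp add: \<Phi>_def Gk_def gk_def)
  also have "\<dots> = (\<integral>X. (\<integral>x. \<Phi> X x \<partial>D) \<partial>\<mu>)"
    by (rule indep_int[OF D_prob intP inv])
  also have "\<dots> = (\<integral>\<omega>. (norm (Pf k \<omega> l))^2 \<partial>\<mu>)" by (simp only: inner)
  finally show "(\<integral>\<omega>. Pf k \<omega> l \<bullet> Gk k \<omega> l \<partial>\<mu>) = (\<integral>\<omega>. (norm (Pf k \<omega> l))^2 \<partial>\<mu>)" .
  show "integrable \<mu> (\<lambda>\<omega>. Pf k \<omega> l \<bullet> Gk k \<omega> l)"
  proof (rule Bochner_Integration.integrable_bound)
    show "integrable \<mu> (\<lambda>\<omega>. (Kp * B * Kp) * (1 + (norm (gk k \<omega>))^2))"
      using gk2_int[of k] by simp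
    show "(\<lambda>\<omega>. Pf k \<omega> l \<bullet> Gk k \<omega> l) \<in> borel_measurable \<mu>" by measurable
    show "AE \<omega> in \<mu>. norm (Pf k \<omega> l \<bullet> Gk k \<omega> l) \<le> norm ((Kp * B * Kp) * (1 + (norm (gk k \<omega>))^2))"
    proof (rule AE_I2)
      fix \<omega>
      have "norm (gk k \<omega>) \<le> 1 + (norm (gk k \<omega>))^2"
      proof -
        have "0 \<le> (norm (gk k \<omega>) - 1)^2" by simp
        hence "2 * norm (gk k \<omega>) \<le> (norm (gk k \<omega>))^2 + 1" by (simp add: power2_diff)
        thus ?thesis using norm_ge_zero[of "gk k \<omega>"] by linarith
      qed
      hence "(Kp * B * Kp) * norm (gk k \<omega>) \<le> (Kp * B * Kp) * (1 + (norm (gk k \<omega>))^2)"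
        using KB by (intro mult_left_mono) auto
      moreover have "0 \<le> (Kp * B * Kp) * (1 + (norm (gk k \<omega>))^2)" using KB by simp
      ultimately show "norm (Pf k \<omega> l \<bullet> Gk k \<omega> l) \<le> norm ((Kp * B * Kp) * (1 + (norm (gk k \<omega>))^2))"
        using bnd[of \<omega> "gk k \<omega>"] by (simp add: Gk_def)
    qed
  qed
qed

end


context sgd_setting
begin

interpretation Dp: prob_space D by (rule D_prob)
interpretation Mp: prob_space \<mu> by (rule prob_space_PiM) (use D_prob in auto)

definition EF where "EF k = (\<integral>\<omega>. f (Xk k \<omega>) \<partial>\<mu>)"
definition AA where "AA k = (\<Sum>l=1..L. \<integral>\<omega>. (norm (Pf k \<omega> l))^2 \<partial>\<mu>)"

lemma AA_nonneg: "AA k \<ge> 0"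
  unfolding AA_def by (intro sum_nonneg integral_nonneg_AE) auto

lemma exp_step: "\<exists>C3\<ge>0. \<forall>k. EF (Suc k) \<le> EF k - st k * AA k + C3 * (st k)^2"
proof -
  obtain C2 where C2: "C2 \<ge> 0" "\<forall>\<omega> k. f (Xk (Suc k) \<omega>) \<le> f (Xk k \<omega>) - st k * (\<Sum>l=1..L. Pf k \<omega> l \<bullet> Gk k \<omega> l)
   + C2 * (st k)^2 * (norm (gk k \<omega>))^2" using step_ineq by blast
  show ?thesis
  proof (intro exI[of _ "C2 * M2"] conjI allI)
    show "0 \<le> C2 * M2" using C2 M2_pos by simp
    fix k
    have i1: "integrable \<mu> (\<lambda>\<omega>. f (Xk k \<omega>))" by (rule F_int)
    have i2: "integrable \<mu> (\<lambda>\<omega>. st k * (\<Sum>l=1..L. Pf k \<omega> l \<bullet> Gk k \<omega> l))"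
      by (rule integrable_mult_right) (intro Bochner_Integration.integrable_sum PG(1))
    have i3: "integrable \<mu> (\<lambda>\<omega>. C2 * (st k)^2 * (norm (gk k \<omega>))^2)"
      by (intro integrable_mult_right gk2_int)
    have "EF (Suc k) \<le> (\<integral>\<omega>. f (Xk k \<omega>) - st k * (\<Sum>l=1..L. Pf k \<omega> l \<bullet> Gk k \<omega> l)
            + C2 * (st k)^2 * (norm (gk k \<omega>))^2 \<partial>\<mu>)"
      unfolding EF_def by (rule integral_mono[OF F_int]) (use i1 i2 i3 C2 in auto)
    also have "\<dots> = EF k - st k * (\<Sum>l=1..L. \<integral>\<omega>. Pf k \<omega> l \<bullet> Gk k \<omega> l \<partial>\<mu>)
            + C2 * (st k)^2 * (\<integral>\<omega>. (norm (gk k \<omega>))^2 \<partial>\<mu>)"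
      using i1 i2 i3 PG(1)
      by (simp add: EF_def Bochner_Integration.integral_add Bochner_Integration.integral_diff
          integral_sum del: upt_Suc)
    also have "(\<Sum>l=1..L. \<integral>\<omega>. Pf k \<omega> l \<bullet> Gk k \<omega> l \<partial>\<mu>) = AA k"
      unfolding AA_def by (simp add: PG(2))
    also have "C2 * (st k)^2 * (\<integral>\<omega>. (norm (gk k \<omega>))^2 \<partial>\<mu>) \<le> C2 * (st k)^2 * M2"
      using C2 gk2_le by (intro mult_left_mono) auto
    finally show "EF (Suc k) \<le> EF k - st k * AA k + C2 * M2 * (st k)^2" by (simp add: mult_ac)
  qed
qed

lemma EF_bounded: "\<exists>Bf. \<forall>k. \<bar>EF k\<bar> \<le> Bf"
proof -
  obtain Bf where Bf: "\<forall>X. orthogonal_matrix X \<longrightarrow> \<bar>f X\<bar> \<le> Bf" using f_bounded by blast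
  have "\<bar>EF k\<bar> \<le> Bf" for k
  proof -
    have "\<bar>EF k\<bar> \<le> (\<integral>\<omega>. \<bar>f (Xk k \<omega>)\<bar> \<partial>\<mu>)" unfolding EF_def
      using integral_norm_bound[of \<mu> "\<lambda>\<omega>. f (Xk k \<omega>)"] by simp
    also have "\<dots> \<le> (\<integral>\<omega>. Bf \<partial>\<mu>)"
      by (rule integral_mono) (use F_int Bf Xk_orth in auto)
    also have "\<dots> = Bf" by (simp add: Mp.prob_space)
    finally show ?thesis .
  qed
  thus ?thesis by blast
qed

lemma telescope:
  assumes "\<forall>k. EF (Suc k) \<le> EF k - st k * AA k + C3 * (st k)^2"
  shows "(\<Sum>k<K. st k * AA k) \<le> EF 0 - EF K + C3 * (\<Sum>k<K. (st k)^2)"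
  using assms by (induction K) (auto simp: sum_distrib_left algebra_simps, smt (verit))

lemma st_sq: "(\<Sum>k<K. (st k)^2) = harm K"
  by (simp add: st_def harm_altdef power_divide inverse_eq_divide)

lemma harm_le_ln: "K \<ge> 1 \<Longrightarrow> harm K \<le> 1 + ln (real K)"
  using euler_mascheroni_sequence_decreasing[of 1 K] by (simp add: harm_def)

lemma st_sum: "K \<ge> 1 \<Longrightarrow> sqrt (real K) \<le> (\<Sum>k<K. st k)"
proof -
  assume K: "K \<ge> 1"
  have "(\<Sum>k<K. 1 / sqrt (real K)) \<le> (\<Sum>k<K. st k)"
    unfolding st_def by (intro sum_mono divide_left_mono real_sqrt_le_mono) (use K in auto)
  moreover have "(\<Sum>k<K. 1 / sqrt (real K)) = sqrt (real K)"
    using K by (simp add: real_div_sqrt)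
  ultimately show ?thesis by simp
qed

lemma final_bound: "\<exists>a b. \<forall>K\<ge>1. Min (AA ` {..<K}) \<le> (a + b * ln (real K)) / sqrt (real K)"
proof -
  obtain C3 where C3: "C3 \<ge> 0" "\<forall>k. EF (Suc k) \<le> EF k - st k * AA k + C3 * (st k)^2" using exp_step by blast
  obtain Bf where Bf: "\<forall>k. \<bar>EF k\<bar> \<le> Bf" using EF_bounded by blast
  have "Min (AA ` {..<K}) \<le> (2 * Bf + C3 + C3 * ln (real K)) / sqrt (real K)" if K: "K \<ge> 1" for K
  proof -
    let ?m = "Min (AA ` {..<K})"
    have "0 < K" using K by simp
    hence ne: "AA ` {..<K} \<noteq> {}" by (metis empty_iff image_is_empty lessThan_iff)
    have m_le: "?m \<le> AA k" if "k < K" for k using that by (intro Min_le) auto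
    have "?m * sqrt (real K) \<le> ?m * (\<Sum>k<K. st k)"
    proof (rule mult_left_mono[OF st_sum[OF K]])
      show "0 \<le> ?m" using ne AA_nonneg by (subst Min_ge_iff) auto
    qed
    also have "\<dots> = (\<Sum>k<K. st k * ?m)" by (simp add: sum_distrib_right mult.commute)
    also have "\<dots> \<le> (\<Sum>k<K. st k * AA k)"
      by (intro sum_mono mult_left_mono m_le) (auto simp: st_def)
    also have "\<dots> \<le> EF 0 - EF K + C3 * (\<Sum>k<K. (st k)^2)" by (rule telescope[OF C3(2)])
    also have "\<dots> \<le> 2 * Bf + C3 * (1 + ln (real K))"
    proof -
      have "EF 0 - EF K \<le> 2 * Bf" using Bf[rule_format, of 0] Bf[rule_format, of K] by linarith
      moreover have "C3 * (\<Sum>k<K. (st k)^2) \<le> C3 * (1 + ln (real K))"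
        unfolding st_sq using C3(1) harm_le_ln[OF K] by (rule mult_left_mono[rotated])
      ultimately show ?thesis by linarith
    qed
    finally have "?m * sqrt (real K) \<le> 2 * Bf + C3 + C3 * ln (real K)" by (simp add: algebra_simps)
    moreover have "sqrt (real K) > 0" using K by simp
    ultimately show ?thesis by (simp add: pos_le_divide_eq)
  qed
  thus ?thesis by (intro exI[of _ "2 * Bf + C3"] exI[of _ C3]) auto
qed

end


theorem theorem4:
  fixes f :: "real^'n^'n \<Rightarrow> real"
    and ft :: "'w \<Rightarrow> real^'n^'n \<Rightarrow> real"
    and D :: "'w measure"
    and L :: nat and V0 :: "nat \<Rightarrow> real^'n" and M1 M2 :: real
  assumes f_diff: "\<forall>X. f differentiable (at X)"
    and M1_pos: "M1 > 0"
    and f_lip: "\<forall>X1 X2. orthogonal_matrix X1 \<longrightarrow> orthogonal_matrix X2 \<longrightarrow>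
                 norm (grad f X1 - grad f X2) \<le> M1 * norm (X1 - X2)"
    and D_prob: "prob_space D"
    and ft_diff: "\<forall>\<omega>\<in>space D. \<forall>X. ft \<omega> differentiable (at X)"
    and ft_meas: "(\<lambda>(\<omega>, X). grad (ft \<omega>) X) \<in> borel_measurable (D \<Otimes>\<^sub>M borel)"
    and unbiased: "\<forall>X. orthogonal_matrix X \<longrightarrow> (\<integral>\<omega>. grad (ft \<omega>) X \<partial>D) = grad f X"
    and M2_pos: "M2 > 0"
    and second_moment: "\<forall>X. orthogonal_matrix X \<longrightarrow>
                 (\<integral>\<^sup>+\<omega>. ennreal ((norm (grad (ft \<omega>) X))^2) \<partial>D) \<le> ennreal M2"
    and V0_nz: "\<forall>l\<in>{1..L}. V0 l \<noteq> 0"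
  shows "(\<forall>\<omega>\<in>space (PiM UNIV (\<lambda>_::nat. D)). \<forall>k. \<forall>l\<in>{1..L}. sgd_iter ft L V0 \<omega> k l \<noteq> 0)
       \<and> (\<forall>\<epsilon>>0. (\<lambda>K::nat. Min {(\<Sum>l=1..L. \<integral>\<omega>. (norm (pgrad f L (sgd_iter ft L V0 \<omega> k) l))^2
                                          \<partial>(PiM UNIV (\<lambda>_::nat. D))) | k. k < K})
                 \<in> o(\<lambda>K. real K powr (\<epsilon> - 1/2)))"
proof (cases "L = 0")
  case True
  have "(\<lambda>K::nat. Min {(\<Sum>l=1..L. \<integral>\<omega>. (norm (pgrad f L (sgd_iter ft L V0 \<omega> k) l))^2
                                          \<partial>(PiM UNIV (\<lambda>_::nat. D))) | k. k < K})
                 \<in> o(\<lambda>K. real K powr (\<epsilon> - 1/2))" if e: "\<epsilon> > 0" for \<epsilon> :: real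
  proof (rule landau_o.big_small_trans)
    show "(\<lambda>K::nat. 1 / sqrt (real K)) \<in> o(\<lambda>K. real K powr (\<epsilon> - 1/2))" using e by real_asymp
    have "eventually (\<lambda>K::nat. norm (Min {(\<Sum>l=1..L. \<integral>\<omega>. (norm (pgrad f L (sgd_iter ft L V0 \<omega> k) l))^2
                                          \<partial>(PiM UNIV (\<lambda>_::nat. D))) | k. k < K}) \<le> 1 * norm (1 / sqrt (real K))) sequentially"
    proof (rule eventually_sequentiallyI[of 1])
      fix K :: nat assume K: "K \<ge> 1"
      have "{(\<Sum>l=1..L. \<integral>\<omega>. (norm (pgrad f L (sgd_iter ft L V0 \<omega> k) l))^2
                                          \<partial>(PiM UNIV (\<lambda>_::nat. D))) | k. k < K} = {0}"
        using True K by (auto intro: exI[of _ 0])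
      thus "norm (Min {(\<Sum>l=1..L. \<integral>\<omega>. (norm (pgrad f L (sgd_iter ft L V0 \<omega> k) l))^2
                                          \<partial>(PiM UNIV (\<lambda>_::nat. D))) | k. k < K}) \<le> 1 * norm (1 / sqrt (real K))"
        by simp
    qed
    thus "(\<lambda>K::nat. Min {(\<Sum>l=1..L. \<integral>\<omega>. (norm (pgrad f L (sgd_iter ft L V0 \<omega> k) l))^2
                                          \<partial>(PiM UNIV (\<lambda>_::nat. D))) | k. k < K}) \<in> O(\<lambda>K. 1 / sqrt (real K))"
      by (rule bigoI)
  qed
  thus ?thesis using True by auto
next
  case False
  hence L1: "L \<ge> 1" by simp
  interpret S: sgd_setting f ft D L V0 M1 M2
    by (rule sgd_setting.intro[OF assms L1])
  have part1: "\<forall>\<omega>\<in>space (PiM UNIV (\<lambda>_::nat. D)). \<forall>k. \<forall>l\<in>{1..L}. sgd_iter ft L V0 \<omega> k l \<noteq> 0"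
    using S.sgd_eq S.it_nz by simp
  obtain a b where ab: "\<forall>K\<ge>1. Min (S.AA ` {..<K}) \<le> (a + b * ln (real K)) / sqrt (real K)"
    using S.final_bound by blast
  have eqA: "(\<Sum>l=1..L. \<integral>\<omega>. (norm (pgrad f L (sgd_iter ft L V0 \<omega> k) l))^2 \<partial>(PiM UNIV (\<lambda>_::nat. D))) = S.AA k" for k
    unfolding S.AA_def
  proof (rule sum.cong[OF refl], rule Bochner_Integration.integral_cong[OF refl])
    fix l \<omega> assume \<omega>: "\<omega> \<in> space (PiM UNIV (\<lambda>_::nat. D))"
    have nz: "\<forall>m\<in>{1..L}. S.itr \<omega> k m \<noteq> 0" using S.it_nz by blast
    show "(norm (pgrad f L (sgd_iter ft L V0 \<omega> k) l))^2 = (norm (S.Pf k \<omega> l))^2"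
      unfolding S.sgd_eq[OF \<omega>] pgrad_char[OF nz f_diff[rule_format]] S.Pf_def S.Xk_def by (rule refl)
  qed
  have setA: "{(\<Sum>l=1..L. \<integral>\<omega>. (norm (pgrad f L (sgd_iter ft L V0 \<omega> k) l))^2 \<partial>(PiM UNIV (\<lambda>_::nat. D))) | k. k < K}
      = S.AA ` {..<K}" for K
    unfolding eqA by auto
  have "(\<lambda>K::nat. Min {(\<Sum>l=1..L. \<integral>\<omega>. (norm (pgrad f L (sgd_iter ft L V0 \<omega> k) l))^2
                                          \<partial>(PiM UNIV (\<lambda>_::nat. D))) | k. k < K})
                 \<in> o(\<lambda>K. real K powr (\<epsilon> - 1/2))" if e: "\<epsilon> > 0" for \<epsilon> :: real
    unfolding setA
  proof (rule landau_o.big_small_trans)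
    show "(\<lambda>K::nat. (a + b * ln (real K)) / sqrt (real K)) \<in> o(\<lambda>K. real K powr (\<epsilon> - 1/2))" using e by real_asymp
    have "eventually (\<lambda>K::nat. norm (Min (S.AA ` {..<K})) \<le> 1 * norm ((a + b * ln (real K)) / sqrt (real K))) sequentially"
    proof (rule eventually_sequentiallyI[of 1])
      fix K :: nat assume K: "K \<ge> 1"
      have "0 < K" using K by simp
      hence ne: "S.AA ` {..<K} \<noteq> {}" by (metis empty_iff image_is_empty lessThan_iff)
      have m0: "0 \<le> Min (S.AA ` {..<K})" using ne S.AA_nonneg by (subst Min_ge_iff) auto
      show "norm (Min (S.AA ` {..<K})) \<le> 1 * norm ((a + b * ln (real K)) / sqrt (real K))"
      proof -
        have h: "Min (S.AA ` {..<K}) \<le> (a + b * ln (real K)) / sqrt (real K)" using ab K by blast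
        show ?thesis using h m0 abs_ge_self[of "(a + b * ln (real K)) / sqrt (real K)"]
          by (simp only: real_norm_def abs_of_nonneg[OF m0] mult_1)
      qed
    qed
    thus "(\<lambda>K::nat. Min (S.AA ` {..<K})) \<in> O(\<lambda>K. (a + b * ln (real K)) / sqrt (real K))"
      by (rule bigoI)
  qed
  thus ?thesis using part1 by auto
qed


end
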